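(* Let $N,N'$ be orchard networks on $X,X'\subseteq[n]$ respectively. Then $N\cong N'$ if and only if $\boldsymbol\mu(N)=\boldsymbol\mu(N')$.
   Context: A (binary) phylogenetic network on a finite set $X\subseteq[n]=\{1,\dots,n\}$ is a directed acyclic graph $N=(V,A)$ without parallel arcs in which every node is exactly one of: the root (indegree 0, outdegree 1; there is exactly one), a leaf (indegree 1, outdegree 0), a tree node (indegree 1, outdegree 2), or a reticulation (indegree 2, outdegree 1); the leaves are identified with the elements of $X$. $V_T(N)$ denotes the set of leaves and tree nodes, $V_H(N)$ the set of reticulations. Two networks are isomorphic ($N\cong N'$) if there is a bijection between their node sets that is the identity on leaves (labels) and maps arcs to arcs and non-arcs to non-arcs. $m(u,v)$ is the number of directed paths from $u$ to $v$ (trivial paths allowed). Extended $\mu$-vectors: $\mu_i(u)=m(u,i)$ for $i\in[n]$ (0 if $i$ is not a leaf), $\mu_0(u)=\sum_{h\in V_H(N)} m(u,h)$, $\mu(u)=(\mu_0(u),\dots,\mu_n(u))$; the extended $\mu$-representation $\boldsymbol\mu(N)$ is the multiset $\{\mu(u)\mid u\in V_T(N)\}$. For distinct leaves $i,j$ with parents $p_i,p_j$: $(i,j)$ is a cherry of $N$ if $p_i=p_j$; a reticulated-cherry of $N$ if $p_i$ is a reticulation, $p_j$ is a tree node and $p_j$ is a parent of $p_i$; reducible if either. Suppressing a node with indegree 1 and outdegree 1 means deleting it and its two arcs and adding an arc from its parent to its child. $N^{(i,j)}$: if $(i,j)$ is a cherry, delete leaf $i$ and its incoming arc, then suppress $p_i$;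 if a reticulated-cherry, delete the arc $p_jp_i$ and suppress $p_i$ and $p_j$. A sequence $S=s_1\cdots s_k$ is reducible in $N$ if $s_1$ is reducible in $N$ and each $s_t$ is reducible in the network obtained by successively reducing $s_1,\dots,s_{t-1}$; $N^S$ is the final network. $N$ is an orchard network if there is a reducible sequence $S$ with $N^S$ equal to the network consisting of a root joined by an arc to a single leaf. *)

theory Defs
  imports Main "HOL-Library.Multiset"
begin

text \<open>A network: finite node set, arc set (no parallel arcs by construction),
  and a labelling of the leaves by elements of [n].\<close>
record 'a net =
  nodes :: "'a set"
  arcs  :: "('a \<times> 'a) set"
  lab   :: "'a \<Rightarrow> nat"

definition indeg :: "'a net \<Rightarrow> 'a \<Rightarrow> nat" where
  "indeg N v = card {u. (u, v) \<in> arcs N}"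

definition outdeg :: "'a net \<Rightarrow> 'a \<Rightarrow> nat" where
  "outdeg N v = card {w. (v, w) \<in> arcs N}"

definition is_root :: "'a net \<Rightarrow> 'a \<Rightarrow> bool" where
  "is_root N v \<longleftrightarrow> v \<in> nodes N \<and> indeg N v = 0 \<and> outdeg N v = 1"

definition is_leaf :: "'a net \<Rightarrow> 'a \<Rightarrow> bool" where
  "is_leaf N v \<longleftrightarrow> v \<in> nodes N \<and> indeg N v = 1 \<and> outdeg N v = 0"

definition is_tree_node :: "'a net \<Rightarrow> 'a \<Rightarrow> bool" where
  "is_tree_node N v \<longleftrightarrow> v \<in> nodes N \<and> indeg N v = 1 \<and> outdeg N v = 2"

definition is_reticulation :: "'a net \<Rightarrow> 'a \<Rightarrow> bool" where
  "is_reticulation N v \<longleftrightarrow> v \<in> nodes N \<and> indeg N v = 2 \<and> outdeg N v = 1"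

definition leaf_set :: "'a net \<Rightarrow> 'a set" where
  "leaf_set N = {v \<in> nodes N. is_leaf N v}"

definition ret_set :: "'a net \<Rightarrow> 'a set" where
  "ret_set N = {v \<in> nodes N. is_reticulation N v}"

definition VT :: "'a net \<Rightarrow> 'a set" where
  "VT N = {v \<in> nodes N. is_leaf N v \<or> is_tree_node N v}"

definition labels :: "'a net \<Rightarrow> nat set" where
  "labels N = lab N ` leaf_set N"

definition phylo_network :: "nat \<Rightarrow> 'a net \<Rightarrow> bool" where
  "phylo_network n N \<longleftrightarrow>
     finite (nodes N) \<and>
     arcs N \<subseteq> nodes N \<times> nodes N \<and>
     acyclic (arcs N) \<and>
     (\<exists>!r. is_root N r) \<and>
     (\<forall>v \<in> nodes N. is_root N v \<or> is_leaf N v \<or> is_tree_node N v \<or> is_reticulation N v) \<and>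
     inj_on (lab N) (leaf_set N) \<and>
     labels N \<subseteq> {1..n}"

definition leaf_node :: "'a net \<Rightarrow> nat \<Rightarrow> 'a" where
  "leaf_node N i = (THE v. v \<in> leaf_set N \<and> lab N v = i)"

definition parent :: "'a net \<Rightarrow> 'a \<Rightarrow> 'a" where
  "parent N v = (THE u. (u, v) \<in> arcs N)"

definition suppress :: "'a net \<Rightarrow> 'a \<Rightarrow> 'a net" where
  "suppress N v = N\<lparr> nodes := nodes N - {v},
     arcs := {e \<in> arcs N. fst e \<noteq> v \<and> snd e \<noteq> v}
             \<union> {(u, w) | u w. (u, v) \<in> arcs N \<and> (v, w) \<in> arcs N} \<rparr>"

definition is_cherry :: "'a net \<Rightarrow> nat \<times> nat \<Rightarrow> bool" where
  "is_cherry N p = (case p of (i, j) \<Rightarrow>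
     i \<noteq> j \<and> i \<in> labels N \<and> j \<in> labels N \<and>
     parent N (leaf_node N i) = parent N (leaf_node N j))"

definition is_ret_cherry :: "'a net \<Rightarrow> nat \<times> nat \<Rightarrow> bool" where
  "is_ret_cherry N p = (case p of (i, j) \<Rightarrow>
     i \<noteq> j \<and> i \<in> labels N \<and> j \<in> labels N \<and>
     is_reticulation N (parent N (leaf_node N i)) \<and>
     is_tree_node N (parent N (leaf_node N j)) \<and>
     (parent N (leaf_node N j), parent N (leaf_node N i)) \<in> arcs N)"

definition reducible_pair :: "'a net \<Rightarrow> nat \<times> nat \<Rightarrow> bool" where
  "reducible_pair N p \<longleftrightarrow> is_cherry N p \<or> is_ret_cherry N p"

definition reduce :: "'a net \<Rightarrow> nat \<times> nat \<Rightarrow> 'a net" where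
  "reduce N p = (case p of (i, j) \<Rightarrow>
     (let li = leaf_node N i; lj = leaf_node N j;
          pi = parent N li; pj = parent N lj in
      if is_cherry N (i, j) then
        suppress (N\<lparr> nodes := nodes N - {li}, arcs := arcs N - {(pi, li)} \<rparr>) pi
      else if is_ret_cherry N (i, j) then
        suppress (suppress (N\<lparr> arcs := arcs N - {(pj, pi)} \<rparr>) pi) pj
      else N))"

fun reducible_seq :: "'a net \<Rightarrow> (nat \<times> nat) list \<Rightarrow> bool" where
  "reducible_seq N [] = True"
| "reducible_seq N (s # S) \<longleftrightarrow> reducible_pair N s \<and> reducible_seq (reduce N s) S"

fun reduce_seq :: "'a net \<Rightarrow> (nat \<times> nat) list \<Rightarrow> 'a net" where
  "reduce_seq N [] = N"
| "reduce_seq N (s # S) = reduce_seq (reduce N s) S"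

definition trivial_net :: "'a net \<Rightarrow> bool" where
  "trivial_net N \<longleftrightarrow> (\<exists>r l. r \<noteq> l \<and> nodes N = {r, l} \<and> arcs N = {(r, l)})"

definition orchard :: "nat \<Rightarrow> 'a net \<Rightarrow> bool" where
  "orchard n N \<longleftrightarrow> phylo_network n N \<and>
     (\<exists>S. reducible_seq N S \<and> trivial_net (reduce_seq N S))"

definition is_path :: "'a net \<Rightarrow> 'a list \<Rightarrow> bool" where
  "is_path N xs \<longleftrightarrow> xs \<noteq> [] \<and> set xs \<subseteq> nodes N \<and>
     (\<forall>k. Suc k < length xs \<longrightarrow> (xs ! k, xs ! Suc k) \<in> arcs N)"

definition npaths :: "'a net \<Rightarrow> 'a \<Rightarrow> 'a \<Rightarrow> nat" where
  "npaths N u v = card {xs. is_path N xs \<and> hd xs = u \<and> last xs = v}"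

definition mu_vec :: "nat \<Rightarrow> 'a net \<Rightarrow> 'a \<Rightarrow> nat list" where
  "mu_vec n N u = map (\<lambda>i. if i = 0 then (\<Sum>h \<in> ret_set N. npaths N u h)
                           else if i \<in> labels N then npaths N u (leaf_node N i)
                           else 0) [0..<Suc n]"

definition mu_rep :: "nat \<Rightarrow> 'a net \<Rightarrow> nat list multiset" where
  "mu_rep n N = image_mset (mu_vec n N) (mset_set (VT N))"

definition net_iso :: "'a net \<Rightarrow> 'b net \<Rightarrow> bool" where
  "net_iso N N' \<longleftrightarrow> (\<exists>f. bij_betw f (nodes N) (nodes N') \<and>
     (\<forall>u \<in> nodes N. \<forall>v \<in> nodes N. (u, v) \<in> arcs N \<longleftrightarrow> (f u, f v) \<in> arcs N') \<and>
     (\<forall>v \<in> leaf_set N. lab N' (f v) = lab N v))"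

end

theory Submission
  imports Defs
begin


definition ch :: "'a net \<Rightarrow> 'a \<Rightarrow> 'a set" where "ch N v = {w. (v,w) \<in> arcs N}"
definition pa :: "'a net \<Rightarrow> 'a \<Rightarrow> 'a set" where "pa N v = {u. (u,v) \<in> arcs N}"
definition PS :: "'a net \<Rightarrow> 'a \<Rightarrow> 'a \<Rightarrow> 'a list set" where
  "PS N u v = {xs. is_path N xs \<and> hd xs = u \<and> last xs = v}"


definition co :: "'a net \<Rightarrow> 'a \<Rightarrow> nat \<Rightarrow> nat" where
  "co N x k = (if k \<in> labels N then npaths N x (leaf_node N k) else 0)"
definition rp :: "'a net \<Rightarrow> 'a \<Rightarrow> nat" where "rp N x = (\<Sum>h\<in>ret_set N. npaths N x h)"
definition lp :: "'a net \<Rightarrow> 'a \<Rightarrow> nat" where "lp N x = (\<Sum>l\<in>leaf_set N. npaths N x l)"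
definition sg :: "'a net \<Rightarrow> 'a \<Rightarrow> nat \<times> (nat \<Rightarrow> nat)" where "sg N x = (rp N x, co N x)"
definition SR :: "'a net \<Rightarrow> (nat \<times> (nat \<Rightarrow> nat)) multiset" where
  "SR N = image_mset (sg N) (mset_set (VT N))"
definition enc :: "nat \<Rightarrow> nat \<times> (nat \<Rightarrow> nat) \<Rightarrow> nat list" where
  "enc n s = map (\<lambda>k. if k = 0 then fst s else snd s k) [0..<Suc n]"
definition dec :: "nat \<Rightarrow> nat list \<Rightarrow> nat \<times> (nat \<Rightarrow> nat)" where
  "dec n xs = (xs ! 0, \<lambda>k. if 1 \<le> k \<and> k \<le> n then xs ! k else 0)"

lemma mu_vec_enc: "mu_vec n N u = enc n (sg N u)"
  unfolding mu_vec_def enc_def sg_def co_def rp_def by simp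

lemma mu_rep_enc: "mu_rep n N = image_mset (enc n) (SR N)"
proof -
  have "mu_vec n N = (\<lambda>u. enc n (sg N u))" by (rule ext) (rule mu_vec_enc)
  thus ?thesis unfolding mu_rep_def SR_def by (simp add: multiset.map_comp comp_def)
qed

lemma dec_enc: assumes "\<And>k. snd s k \<noteq> 0 \<Longrightarrow> 1 \<le> k \<and> k \<le> n" shows "dec n (enc n s) = s"
proof -
  have "(\<lambda>k. if 1 \<le> k \<and> k \<le> n then enc n s ! k else 0) = snd s"
  proof
    fix k show "(if 1 \<le> k \<and> k \<le> n then enc n s ! k else 0) = snd s k"
      using assms[of k] unfolding enc_def by (auto simp del: upt_Suc simp: nth_append)
  qed
  moreover have "enc n s ! 0 = fst s" unfolding enc_def by (simp del: upt_Suc)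
  ultimately show ?thesis unfolding dec_def by (cases s) simp
qed

lemma is_path_Cons:
  assumes "ys \<noteq> []"
  shows "is_path N (u # ys) \<longleftrightarrow> u \<in> nodes N \<and> (u, hd ys) \<in> arcs N \<and> is_path N ys"
proof
  assume A: "is_path N (u # ys)"
  have "(u, hd ys) \<in> arcs N"
  proof -
    have "((u#ys) ! 0, (u#ys) ! Suc 0) \<in> arcs N" using A assms unfolding is_path_def by auto
    thus ?thesis using assms by (simp add: hd_conv_nth)
  qed
  moreover have "is_path N ys" unfolding is_path_def
  proof (intro conjI allI impI)
    show "set ys \<subseteq> nodes N" using A unfolding is_path_def by auto
    fix k assume "Suc k < length ys"
    hence "((u#ys) ! Suc k, (u#ys) ! Suc (Suc k)) \<in> arcs N" using A unfolding is_path_def by auto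
    thus "(ys ! k, ys ! Suc k) \<in> arcs N" by simp
  qed (rule assms)
  ultimately show "u \<in> nodes N \<and> (u, hd ys) \<in> arcs N \<and> is_path N ys" using A unfolding is_path_def by auto
next
  assume A: "u \<in> nodes N \<and> (u, hd ys) \<in> arcs N \<and> is_path N ys"
  show "is_path N (u # ys)" unfolding is_path_def
  proof (intro conjI allI impI)
    show "set (u # ys) \<subseteq> nodes N" using A unfolding is_path_def by auto
    fix k assume k: "Suc k < length (u # ys)"
    show "((u # ys) ! k, (u # ys) ! Suc k) \<in> arcs N"
    proof (cases k)
      case 0 thus ?thesis using A assms by (simp add: hd_conv_nth)
    next
      case (Suc m) thus ?thesis using A k unfolding is_path_def by auto
    qed
  qed simp
qed

lemma is_path_single: "is_path N [u] \<longleftrightarrow> u \<in> nodes N"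
  unfolding is_path_def by auto

lemma is_path_trancl:
  assumes "is_path N xs" "i < j" "j < length xs"
  shows "(xs ! i, xs ! j) \<in> (arcs N)\<^sup>+"
  using assms(2,3)
proof (induction j)
  case 0 thus ?case by simp
next
  case (Suc j)
  have a: "(xs ! j, xs ! Suc j) \<in> arcs N" using assms(1) Suc.prems unfolding is_path_def by auto
  show ?case
  proof (cases "i = j")
    case True thus ?thesis using a by auto
  next
    case False
    hence "(xs ! i, xs ! j) \<in> (arcs N)\<^sup>+" using Suc by auto
    thus ?thesis using a by auto
  qed
qed

lemma indeg_pa: "indeg N v = card (pa N v)" unfolding indeg_def pa_def ..
lemma outdeg_ch: "outdeg N v = card (ch N v)" unfolding outdeg_def ch_def ..

locale pn =
  fixes n :: nat and N :: "'a net"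
  assumes P: "phylo_network n N"
begin

lemma finV: "finite (nodes N)" using P unfolding phylo_network_def by auto
lemma arcsV: "arcs N \<subseteq> nodes N \<times> nodes N" using P unfolding phylo_network_def by auto
lemma arcV1: "(x,y) \<in> arcs N \<Longrightarrow> x \<in> nodes N" using arcsV by auto
lemma arcV2: "(x,y) \<in> arcs N \<Longrightarrow> y \<in> nodes N" using arcsV by auto
lemma finA: "finite (arcs N)" using finV arcsV finite_subset by blast
lemma acyc: "acyclic (arcs N)" using P unfolding phylo_network_def by auto
lemma wfc: "wf ((arcs N)\<inverse>)" using finA acyc finite_acyclic_wf_converse by blast
lemma wfa: "wf (arcs N)" using finA acyc finite_acyclic_wf by blast
lemma irr: "(x,x) \<notin> arcs N" using acyc unfolding acyclic_def by auto
lemma no_back: "(x,y) \<in> arcs N \<Longrightarrow> (y,x) \<notin> (arcs N)\<^sup>*"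
  using acyc unfolding acyclic_def by (meson rtrancl_into_trancl2)

lemma ch_sub: "ch N x \<subseteq> nodes N" unfolding ch_def using arcV2 by auto
lemma pa_sub: "pa N x \<subseteq> nodes N" unfolding pa_def using arcV1 by auto
lemma fin_ch: "finite (ch N x)" using ch_sub finV finite_subset by blast
lemma fin_pa: "finite (pa N x)" using pa_sub finV finite_subset by blast

lemma classify: "x \<in> nodes N \<Longrightarrow> is_root N x \<or> is_leaf N x \<or> is_tree_node N x \<or> is_reticulation N x"
  using P unfolding phylo_network_def by auto

lemma ex1_root: "\<exists>!r. is_root N r" using P unfolding phylo_network_def by auto

definition rt where "rt = (THE r. is_root N r)"
lemma rt: "is_root N rt" unfolding rt_def using ex1_root theI' by metis
lemma rt_uniq: "is_root N x \<Longrightarrow> x = rt" using ex1_root rt by blast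

lemma leafD: assumes "is_leaf N x" shows "ch N x = {}" "\<exists>p. pa N x = {p}"
proof -
  have c: "card (ch N x) = 0" "card (pa N x) = 1" using assms unfolding is_leaf_def indeg_pa outdeg_ch by auto
  show "ch N x = {}" using c(1) fin_ch card_0_eq by blast
  show "\<exists>p. pa N x = {p}" using card_1_singleton_iff[THEN iffD1, OF c(2)[unfolded One_nat_def]] .
qed
lemma treeD: assumes "is_tree_node N x" shows "\<exists>a b. a \<noteq> b \<and> ch N x = {a,b}" "\<exists>p. pa N x = {p}"
proof -
  have c: "card (ch N x) = 2" "card (pa N x) = 1" using assms unfolding is_tree_node_def indeg_pa outdeg_ch by auto
  show "\<exists>a b. a \<noteq> b \<and> ch N x = {a,b}" using card_2_iff[THEN iffD1, OF c(1)] by blast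
  show "\<exists>p. pa N x = {p}" using card_1_singleton_iff[THEN iffD1, OF c(2)[unfolded One_nat_def]] .
qed
lemma retD: assumes "is_reticulation N x" shows "\<exists>c. ch N x = {c}" "\<exists>a b. a \<noteq> b \<and> pa N x = {a,b}"
proof -
  have c: "card (ch N x) = 1" "card (pa N x) = 2" using assms unfolding is_reticulation_def indeg_pa outdeg_ch by auto
  show "\<exists>c. ch N x = {c}" using card_1_singleton_iff[THEN iffD1, OF c(1)[unfolded One_nat_def]] .
  show "\<exists>a b. a \<noteq> b \<and> pa N x = {a,b}" using card_2_iff[THEN iffD1, OF c(2)] by blast
qed
lemma rootD: assumes "is_root N x" shows "\<exists>c. ch N x = {c}" "pa N x = {}"
proof -
  have c: "card (ch N x) = 1" "card (pa N x) = 0" using assms unfolding is_root_def indeg_pa outdeg_ch by auto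
  show "\<exists>c. ch N x = {c}" using card_1_singleton_iff[THEN iffD1, OF c(1)[unfolded One_nat_def]] .
  show "pa N x = {}" using c(2) fin_pa card_0_eq by blast
qed

lemma PS_notin: assumes "u \<notin> nodes N" shows "PS N u v = {}"
proof -
  { fix xs assume "xs \<in> PS N u v" hence "is_path N xs" "hd xs = u" unfolding PS_def by auto
    hence "u \<in> nodes N" unfolding is_path_def using hd_in_set by blast }
  thus ?thesis using assms by blast
qed

lemma PS_same: "u \<in> nodes N \<Longrightarrow> PS N u u = {[u]}"
proof -
  assume u: "u \<in> nodes N"
  { fix xs assume xs: "is_path N xs" "hd xs = u" "last xs = u"
    have "xs = [u]"
    proof (rule ccontr)
      assume "xs \<noteq> [u]"
      with xs have L: "length xs > 1" unfolding is_path_def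
        by (metis One_nat_def Suc_lessI hd_Cons_tl length_0_conv length_Suc_conv length_greater_0_conv list.sel(3))
      hence "(xs ! 0, xs ! (length xs - 1)) \<in> (arcs N)\<^sup>+" using is_path_trancl[OF xs(1)] by auto
      moreover have "xs ! 0 = u" using xs L by (cases xs) auto
      moreover have "xs ! (length xs - 1) = u" using xs L by (metis last_conv_nth list.size(3) not_less_zero)
      ultimately show False using acyc unfolding acyclic_def by auto
    qed }
  thus ?thesis using u unfolding PS_def by (auto simp: is_path_single)
qed

lemma PS_step: assumes "u \<noteq> v"
  shows "PS N u v = (\<Union>w\<in>ch N u. (#) u ` PS N w v)"
proof
  show "PS N u v \<subseteq> (\<Union>w\<in>ch N u. (#) u ` PS N w v)"
  proof
    fix xs assume "xs \<in> PS N u v"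
    hence xs: "is_path N xs" "hd xs = u" "last xs = v" unfolding PS_def by auto
    have "xs \<noteq> []" using xs(1) unfolding is_path_def by simp
    then obtain ys where ys: "xs = u # ys" using xs(2) by (cases xs) auto
    have ne: "ys \<noteq> []" using ys xs assms by auto
    have c: "u \<in> nodes N \<and> (u, hd ys) \<in> arcs N \<and> is_path N ys" using is_path_Cons[OF ne] xs(1) ys by simp
    have "last ys = v" using xs ys ne by simp
    hence "ys \<in> PS N (hd ys) v" "hd ys \<in> ch N u" using c unfolding PS_def ch_def by auto
    thus "xs \<in> (\<Union>w\<in>ch N u. (#) u ` PS N w v)" using ys by blast
  qed
next
  show "(\<Union>w\<in>ch N u. (#) u ` PS N w v) \<subseteq> PS N u v"
  proof
    fix xs assume "xs \<in> (\<Union>w\<in>ch N u. (#) u ` PS N w v)"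
    then obtain w ys where w: "(u,w) \<in> arcs N" "ys \<in> PS N w v" "xs = u # ys" unfolding ch_def by auto
    have ys: "is_path N ys" "hd ys = w" "last ys = v" using w unfolding PS_def by auto
    have ne: "ys \<noteq> []" using ys unfolding is_path_def by auto
    have u: "u \<in> nodes N" using arcV1 w(1) .
    have "is_path N xs" unfolding w(3) is_path_Cons[OF ne] using u w(1) ys by simp
    moreover have "last xs = v" using ys ne w(3) by simp
    ultimately show "xs \<in> PS N u v" using w(3) unfolding PS_def by simp
  qed
qed

lemma PS_fin: "finite (PS N u v)"
proof (induction u rule: wf_induct[OF wfc])
  case (1 u)
  show ?case
  proof (cases "u \<in> nodes N")
    case False thus ?thesis by (simp add: PS_notin)
  next
    case True
    show ?thesis
    proof (cases "u = v")
      case True with \<open>u \<in> nodes N\<close> show ?thesis by (simp add: PS_same)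
    next
      case False
      have "\<And>w. w\<in>ch N u \<Longrightarrow> finite (PS N w v)" using 1 unfolding ch_def by auto
      thus ?thesis unfolding PS_step[OF False] using fin_ch by blast
    qed
  qed
qed

lemma np_notin: "u \<notin> nodes N \<Longrightarrow> npaths N u v = 0"
  unfolding npaths_def PS_def[symmetric] by (simp add: PS_notin)

lemma np_rec: assumes "u \<in> nodes N"
  shows "npaths N u v = (if u = v then 1 else (\<Sum>w\<in>ch N u. npaths N w v))"
proof (cases "u = v")
  case True thus ?thesis using assms unfolding npaths_def PS_def[symmetric] by (simp add: PS_same)
next
  case False
  have "card (\<Union>w\<in>ch N u. (#) u ` PS N w v) = (\<Sum>w\<in>ch N u. card ((#) u ` PS N w v))"
  proof (rule card_UN_disjoint)
    show "\<forall>i\<in>ch N u. \<forall>j\<in>ch N u. i \<noteq> j \<longrightarrow> (#) u ` PS N i v \<inter> (#) u ` PS N j v = {}"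
      unfolding PS_def by auto
  qed (auto simp: fin_ch PS_fin)
  also have "\<dots> = (\<Sum>w\<in>ch N u. npaths N w v)"
    unfolding npaths_def PS_def[symmetric] by (simp add: card_image)
  finally show ?thesis using False unfolding npaths_def PS_def[symmetric] PS_step[OF False] by simp
qed

lemma np_unique:
  assumes "\<And>x. x \<in> nodes N \<Longrightarrow> f x = (if x = y then 1 else (\<Sum>w\<in>ch N x. f w))"
  shows "x \<in> nodes N \<Longrightarrow> f x = npaths N x y"
proof (induction x rule: wf_induct[OF wfc])
  case (1 x)
  show ?case
  proof (cases "x = y")
    case True thus ?thesis using assms 1 np_rec by simp
  next
    case False
    have "(\<Sum>w\<in>ch N x. f w) = (\<Sum>w\<in>ch N x. npaths N w y)"
    proof (rule sum.cong)
      fix w assume w: "w \<in> ch N x"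
      hence "w \<in> nodes N" "(w,x) \<in> (arcs N)\<inverse>" using ch_sub unfolding ch_def by auto
      thus "f w = npaths N w y" using 1(1) by blast
    qed simp
    thus ?thesis using assms[OF 1(2)] np_rec[OF 1(2)] False by simp
  qed
qed


lemma np_reach: "npaths N x y \<noteq> 0 \<Longrightarrow> (x, y) \<in> (arcs N)\<^sup>*"
proof (induction x rule: wf_induct[OF wfc])
  case (1 x)
  show ?case
  proof (cases "x \<in> nodes N")
    case False thus ?thesis using np_notin 1 by simp
  next
    case True
    show ?thesis
    proof (cases "x = y")
      case True thus ?thesis by simp
    next
      case False
      hence "(\<Sum>w\<in>ch N x. npaths N w y) \<noteq> 0" using np_rec[OF \<open>x \<in> nodes N\<close>] 1(2) by simp
      then obtain w where w: "w \<in> ch N x" "npaths N w y \<noteq> 0" by (rule sum.not_neutral_contains_not_neutral)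
      hence a: "(x, w) \<in> arcs N" unfolding ch_def by simp
      hence "(w, y) \<in> (arcs N)\<^sup>*" using 1(1) w(2) by auto
      thus ?thesis using a by (meson converse_rtrancl_into_rtrancl)
    qed
  qed
qed

lemma np_pos: assumes "(x, y) \<in> (arcs N)\<^sup>*" "y \<in> nodes N" shows "npaths N x y \<ge> 1"
  using assms(1)
proof (induction rule: converse_rtrancl_induct)
  case base thus ?case using np_rec[OF assms(2)] by simp
next
  case (step x w)
  have x: "x \<in> nodes N" using step(1) arcV1 by blast
  show ?case
  proof (cases "x = y")
    case True thus ?thesis using np_rec[OF x] by simp
  next
    case False
    have "w \<in> ch N x" using step(1) unfolding ch_def by simp
    hence "npaths N w y \<le> (\<Sum>w\<in>ch N x. npaths N w y)" using fin_ch by (intro member_le_sum) auto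
    thus ?thesis using np_rec[OF x] False step(3) by simp
  qed
qed

lemma np_zero_back: assumes "(y, x) \<in> arcs N" shows "npaths N x y = 0"
proof (rule ccontr)
  assume "npaths N x y \<noteq> 0"
  hence "(x, y) \<in> (arcs N)\<^sup>*" using np_reach by auto
  thus False using no_back assms by auto
qed

lemma np_leaf: assumes "is_leaf N x" shows "npaths N x y = (if x = y then 1 else 0)"
proof -
  have "x \<in> nodes N" using assms unfolding is_leaf_def by simp
  thus ?thesis using np_rec leafD(1)[OF assms] by simp
qed

lemma np_rec2: assumes "x \<in> nodes N"
  shows "npaths N x y = (if x = y then 1 else 0) + (\<Sum>w\<in>ch N x. npaths N w y)"
proof (cases "x = y")
  case True
  have "\<And>w. w \<in> ch N x \<Longrightarrow> npaths N w y = 0"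
  proof -
    fix w assume w: "w \<in> ch N x"
    show "npaths N w y = 0"
    proof (rule ccontr)
      assume "npaths N w y \<noteq> 0"
      hence "(w, y) \<in> (arcs N)\<^sup>*" using np_reach by auto
      thus False using no_back w True unfolding ch_def by auto
    qed
  qed
  thus ?thesis using np_rec[OF assms] True by simp
next
  case False thus ?thesis using np_rec[OF assms] by simp
qed

lemma np_back: assumes "y \<in> nodes N"
  shows "npaths N x y = (if x = y then 1 else 0) + (\<Sum>p\<in>pa N y. npaths N x p)"
proof (cases "x \<in> nodes N")
  case False
  hence "x \<noteq> y" using assms by auto
  thus ?thesis using False np_notin by simp
next
  case True
  define f where "f x = (if x = y then 1 else 0) + (\<Sum>p\<in>pa N y. npaths N x p)" for x
  have "\<And>x. x \<in> nodes N \<Longrightarrow> f x = (if x = y then 1 else (\<Sum>w\<in>ch N x. f w))"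
  proof -
    fix x assume x: "x \<in> nodes N"
    show "f x = (if x = y then 1 else (\<Sum>w\<in>ch N x. f w))"
    proof (cases "x = y")
      case True
      have "\<And>p. p \<in> pa N y \<Longrightarrow> npaths N y p = 0" using np_zero_back unfolding pa_def by auto
      thus ?thesis using True unfolding f_def by simp
    next
      case False
      have e: "\<And>p. p \<in> pa N y \<Longrightarrow> npaths N x p = (if x = p then 1 else 0) + (\<Sum>w\<in>ch N x. npaths N w p)"
      proof -
        fix p assume p: "p \<in> pa N y"
        show "npaths N x p = (if x = p then 1 else 0) + (\<Sum>w\<in>ch N x. npaths N w p)"
          using np_rec2[OF x] .
      qed
      have "f x = (\<Sum>p\<in>pa N y. (if x = p then 1 else 0) + (\<Sum>w\<in>ch N x. npaths N w p))"
        unfolding f_def using False e by simp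
      also have "\<dots> = (\<Sum>p\<in>pa N y. (if x = p then 1 else 0)) + (\<Sum>p\<in>pa N y. \<Sum>w\<in>ch N x. npaths N w p)"
        by (rule sum.distrib)
      also have "(\<Sum>p\<in>pa N y. (if x = p then 1 else 0)) = (if x \<in> pa N y then 1 else (0::nat))"
        using fin_pa by (simp add: sum.delta)
      also have "(\<Sum>p\<in>pa N y. \<Sum>w\<in>ch N x. npaths N w p) = (\<Sum>w\<in>ch N x. \<Sum>p\<in>pa N y. npaths N w p)"
        by (rule sum.swap)
      finally have 1: "f x = (if x \<in> pa N y then 1 else 0) + (\<Sum>w\<in>ch N x. \<Sum>p\<in>pa N y. npaths N w p)" .
      have "(\<Sum>w\<in>ch N x. f w) = (\<Sum>w\<in>ch N x. (if w = y then 1 else 0)) + (\<Sum>w\<in>ch N x. \<Sum>p\<in>pa N y. npaths N w p)"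
        unfolding f_def by (rule sum.distrib)
      also have "(\<Sum>w\<in>ch N x. (if w = y then 1 else 0)) = (if y \<in> ch N x then 1 else (0::nat))"
        using fin_ch by (simp add: sum.delta')
      finally have 2: "(\<Sum>w\<in>ch N x. f w) = (if y \<in> ch N x then 1 else 0) + (\<Sum>w\<in>ch N x. \<Sum>p\<in>pa N y. npaths N w p)" .
      have "x \<in> pa N y \<longleftrightarrow> y \<in> ch N x" unfolding pa_def ch_def by simp
      thus ?thesis using 1 2 False by simp
    qed
  qed
  from np_unique[OF this True] show ?thesis unfolding f_def by simp
qed

lemma np_back1: assumes "y \<in> nodes N" "pa N y = {p}" "x \<noteq> y" shows "npaths N x y = npaths N x p"
  using np_back[OF assms(1), of x] assms by simp

lemma np_back2: assumes "y \<in> nodes N" "pa N y = {p,q}" "p \<noteq> q" "x \<noteq> y"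
  shows "npaths N x y = npaths N x p + npaths N x q"
  using np_back[OF assms(1), of x] assms by simp

lemma np_sum_rec: assumes "x \<in> nodes N" "finite T"
  shows "(\<Sum>y\<in>T. npaths N x y) = (if x \<in> T then 1 else 0) + (\<Sum>w\<in>ch N x. \<Sum>y\<in>T. npaths N w y)"
proof -
  have "(\<Sum>y\<in>T. npaths N x y) = (\<Sum>y\<in>T. (if x = y then 1 else 0) + (\<Sum>w\<in>ch N x. npaths N w y))"
    using np_rec2[OF assms(1)] by simp
  also have "\<dots> = (\<Sum>y\<in>T. (if x = y then 1 else 0)) + (\<Sum>y\<in>T. \<Sum>w\<in>ch N x. npaths N w y)"
    by (rule sum.distrib)
  also have "(\<Sum>y\<in>T. (if x = y then 1 else 0)) = (if x \<in> T then 1 else (0::nat))"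
    using assms(2) by (simp add: sum.delta)
  also have "(\<Sum>y\<in>T. \<Sum>w\<in>ch N x. npaths N w y) = (\<Sum>w\<in>ch N x. \<Sum>y\<in>T. npaths N w y)"
    by (rule sum.swap)
  finally show ?thesis .
qed

lemma nonroot_pa: assumes "x \<in> nodes N" "\<not> is_root N x" shows "\<exists>p. (p, x) \<in> arcs N"
proof -
  have "is_leaf N x \<or> is_tree_node N x \<or> is_reticulation N x" using classify[OF assms(1)] assms(2) by auto
  hence "pa N x \<noteq> {}" using leafD(2) treeD(2) retD(2) by fastforce
  thus ?thesis unfolding pa_def by auto
qed

lemma nonleaf_ch: assumes "x \<in> nodes N" "\<not> is_leaf N x" shows "\<exists>w. (x, w) \<in> arcs N"
proof -
  have "is_root N x \<or> is_tree_node N x \<or> is_reticulation N x" using classify[OF assms(1)] assms(2) by auto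
  hence "ch N x \<noteq> {}" using rootD(1) treeD(1) retD(1) by fastforce
  thus ?thesis unfolding ch_def by auto
qed

lemma reach_root: "x \<in> nodes N \<Longrightarrow> (rt, x) \<in> (arcs N)\<^sup>*"
proof (induction x rule: wf_induct[OF wfa])
  case (1 x)
  show ?case
  proof (cases "is_root N x")
    case True thus ?thesis using rt_uniq by simp
  next
    case False
    then obtain p where p: "(p, x) \<in> arcs N" using nonroot_pa 1(2) by blast
    hence "(rt, p) \<in> (arcs N)\<^sup>*" using 1(1) arcV1 by blast
    thus ?thesis using p by simp
  qed
qed

lemma root_child_not_ret: assumes "(rt, c) \<in> arcs N" shows "\<not> is_reticulation N c"
proof
  assume r: "is_reticulation N c"
  obtain a b where ab: "a \<noteq> b" "pa N c = {a,b}" using retD(2)[OF r] by blast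
  obtain p where p: "p \<in> pa N c" "p \<noteq> rt" using ab by blast
  obtain d where d: "ch N rt = {d}" using rootD(1)[OF rt] by blast
  have pc: "(p, c) \<in> arcs N" using p unfolding pa_def by simp
  have "(rt, p) \<in> (arcs N)\<^sup>*" using reach_root arcV1[OF pc] by blast
  then obtain z where z: "(rt, z) \<in> arcs N" "(z, p) \<in> (arcs N)\<^sup>*" using p(2)
    by (metis converse_rtranclE)
  have "z \<in> ch N rt" "c \<in> ch N rt" using z(1) assms unfolding ch_def by auto
  hence "z = c" using d by simp
  thus False using z(2) no_back pc by simp
qed

lemma ret_tree_anc: "is_reticulation N x \<Longrightarrow> \<exists>t. is_tree_node N t \<and> (t, x) \<in> (arcs N)\<^sup>+"
proof (induction x rule: wf_induct[OF wfa])
  case (1 x)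
  obtain a b where ab: "a \<noteq> b" "pa N x = {a,b}" using retD(2)[OF 1(2)] by blast
  obtain p where p: "p \<in> pa N x" "p \<noteq> rt" using ab by blast
  have px: "(p, x) \<in> arcs N" using p unfolding pa_def by simp
  have pn: "p \<in> nodes N" using arcV1[OF px] .
  have "\<not> is_leaf N p" using leafD(1) px unfolding ch_def by blast
  moreover have "\<not> is_root N p" using rt_uniq p(2) by blast
  ultimately have "is_tree_node N p \<or> is_reticulation N p" using classify[OF pn] by blast
  thus ?case
  proof
    assume "is_tree_node N p" thus ?thesis using px by blast
  next
    assume "is_reticulation N p"
    then obtain t where "is_tree_node N t" "(t, p) \<in> (arcs N)\<^sup>+" using 1(1) px by blast
    thus ?thesis using px by (meson trancl_into_trancl)
  qed
qed

lemma leaf_set_iff: "x \<in> leaf_set N \<longleftrightarrow> is_leaf N x" unfolding leaf_set_def is_leaf_def by auto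
lemma ret_set_iff: "x \<in> ret_set N \<longleftrightarrow> is_reticulation N x" unfolding ret_set_def is_reticulation_def by auto
lemma fin_leaf: "finite (leaf_set N)" using finV unfolding leaf_set_def by simp
lemma fin_ret: "finite (ret_set N)" using finV unfolding ret_set_def by simp
lemma fin_VT: "finite (VT N)" using finV unfolding VT_def by simp
lemma inj_lab: "inj_on (lab N) (leaf_set N)" using P unfolding phylo_network_def by simp
lemma labels_n: "labels N \<subseteq> {1..n}" using P unfolding phylo_network_def by simp

lemma ln: assumes "k \<in> labels N" shows "leaf_node N k \<in> leaf_set N" "lab N (leaf_node N k) = k"
proof -
  obtain l where l: "l \<in> leaf_set N" "lab N l = k" using assms unfolding labels_def by auto
  have u: "\<And>v. v \<in> leaf_set N \<and> lab N v = k \<Longrightarrow> v = l" using inj_lab l unfolding inj_on_def by blast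
  have "leaf_node N k = l" unfolding leaf_node_def using l u by blast
  thus "leaf_node N k \<in> leaf_set N" "lab N (leaf_node N k) = k" using l by auto
qed

lemma ln_lab: assumes "l \<in> leaf_set N" shows "leaf_node N (lab N l) = l"
proof -
  have k: "lab N l \<in> labels N" using assms unfolding labels_def by simp
  show ?thesis using ln[OF k] inj_lab assms unfolding inj_on_def by blast
qed

lemma co_supp: "co N x k \<noteq> 0 \<Longrightarrow> 1 \<le> k \<and> k \<le> n"
  using labels_n unfolding co_def by (auto split: if_splits)

lemma lp_co: "lp N x = (\<Sum>k\<in>labels N. co N x k)"
proof -
  have "(\<Sum>k\<in>labels N. co N x k) = (\<Sum>l\<in>leaf_set N. co N x (lab N l))"
    unfolding labels_def by (simp add: sum.reindex[OF inj_lab] comp_def)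
  also have "\<dots> = (\<Sum>l\<in>leaf_set N. npaths N x l)"
  proof (rule sum.cong)
    fix l assume l: "l \<in> leaf_set N"
    have "lab N l \<in> labels N" using l unfolding labels_def by simp
    thus "co N x (lab N l) = npaths N x l" unfolding co_def using ln_lab[OF l] by simp
  qed simp
  finally show ?thesis unfolding lp_def by simp
qed

lemma lp_co_n: "lp N x = (\<Sum>k\<in>{1..n}. co N x k)"
proof -
  have "(\<Sum>k\<in>labels N. co N x k) = (\<Sum>k\<in>{1..n}. co N x k)"
    by (rule sum.mono_neutral_left) (use labels_n in \<open>auto simp: co_def\<close>)
  thus ?thesis using lp_co by simp
qed

lemma lp_rec: assumes "x \<in> nodes N"
  shows "lp N x = (if is_leaf N x then 1 else 0) + (\<Sum>w\<in>ch N x. lp N w)"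
  unfolding lp_def using np_sum_rec[OF assms fin_leaf] leaf_set_iff by simp

lemma rp_rec: assumes "x \<in> nodes N"
  shows "rp N x = (if is_reticulation N x then 1 else 0) + (\<Sum>w\<in>ch N x. rp N w)"
  unfolding rp_def using np_sum_rec[OF assms fin_ret] ret_set_iff by simp

lemma lp_ge1: "x \<in> nodes N \<Longrightarrow> lp N x \<ge> 1"
proof (induction x rule: wf_induct[OF wfc])
  case (1 x)
  show ?case
  proof (cases "is_leaf N x")
    case True thus ?thesis using lp_rec[OF 1(2)] by simp
  next
    case False
    then obtain w where w: "(x, w) \<in> arcs N" using nonleaf_ch 1(2) by blast
    have "lp N w \<ge> 1" using 1(1) w arcV2 by blast
    moreover have "lp N w \<le> (\<Sum>w\<in>ch N x. lp N w)" using w fin_ch unfolding ch_def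
      by (intro member_le_sum) auto
    ultimately show ?thesis using lp_rec[OF 1(2)] by simp
  qed
qed

lemma leaf_lp: "is_leaf N x \<Longrightarrow> lp N x = 1"
  using lp_rec leafD(1) unfolding is_leaf_def by simp
lemma leaf_rp: "is_leaf N x \<Longrightarrow> rp N x = 0"
  using rp_rec leafD(1) unfolding is_leaf_def is_reticulation_def by simp

lemma tree_lp: assumes "is_tree_node N x" shows "lp N x \<ge> 2"
proof -
  obtain a b where ab: "a \<noteq> b" "ch N x = {a,b}" using treeD(1)[OF assms] by blast
  have "a \<in> nodes N" "b \<in> nodes N" using ab ch_sub by auto
  hence "lp N a \<ge> 1" "lp N b \<ge> 1" using lp_ge1 by auto
  moreover have "\<not> is_leaf N x" using assms unfolding is_leaf_def is_tree_node_def by simp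
  ultimately show ?thesis using lp_rec[of x] ab assms unfolding is_tree_node_def by simp
qed

lemma co_leaf: assumes "is_leaf N x" shows "co N x k = (if k = lab N x then 1 else 0)"
proof -
  have xl: "x \<in> leaf_set N" using assms leaf_set_iff by simp
  show ?thesis
  proof (cases "k = lab N x")
    case True
    hence "k \<in> labels N" using xl unfolding labels_def by simp
    thus ?thesis using True ln_lab[OF xl] np_leaf[OF assms] unfolding co_def by simp
  next
    case False
    { assume k: "k \<in> labels N"
      hence "leaf_node N k \<noteq> x" using ln(2)[OF k] False by auto }
    thus ?thesis using False np_leaf[OF assms] unfolding co_def by auto
  qed
qed
end

locale isom = A: pn n N + B: pn n N' for n and N :: "'a net" and N' :: "'b net" +
  fixes f :: "'a \<Rightarrow> 'b"
  assumes bij: "bij_betw f (nodes N) (nodes N')"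
    and arc: "\<And>u v. u \<in> nodes N \<Longrightarrow> v \<in> nodes N \<Longrightarrow> (u, v) \<in> arcs N \<longleftrightarrow> (f u, f v) \<in> arcs N'"
    and labf: "\<And>v. v \<in> leaf_set N \<Longrightarrow> lab N' (f v) = lab N v"
begin

lemma inj: "inj_on f (nodes N)" using bij_betw_imp_inj_on[OF bij] .
lemma img: "f ` nodes N = nodes N'" using bij_betw_imp_surj_on[OF bij] .
lemma fV: "x \<in> nodes N \<Longrightarrow> f x \<in> nodes N'" using img by blast
lemma finv: "y \<in> nodes N' \<Longrightarrow> \<exists>x\<in>nodes N. y = f x" using img by blast

lemma ch_f: assumes "x \<in> nodes N" shows "ch N' (f x) = f ` ch N x"
proof
  show "ch N' (f x) \<subseteq> f ` ch N x"
  proof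
    fix y assume y: "y \<in> ch N' (f x)"
    then obtain w where w: "w \<in> nodes N" "y = f w" using finv B.ch_sub by blast
    have "(x, w) \<in> arcs N" using arc[OF assms w(1)] y w(2) unfolding ch_def by simp
    thus "y \<in> f ` ch N x" using w unfolding ch_def by simp
  qed
next
  show "f ` ch N x \<subseteq> ch N' (f x)"
  proof
    fix y assume "y \<in> f ` ch N x"
    then obtain w where w: "(x, w) \<in> arcs N" "y = f w" unfolding ch_def by auto
    have "w \<in> nodes N" using A.arcV2[OF w(1)] .
    thus "y \<in> ch N' (f x)" using arc[OF assms] w unfolding ch_def by simp
  qed
qed

lemma pa_f: assumes "x \<in> nodes N" shows "pa N' (f x) = f ` pa N x"
proof
  show "pa N' (f x) \<subseteq> f ` pa N x"
  proof
    fix y assume y: "y \<in> pa N' (f x)"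
    then obtain w where w: "w \<in> nodes N" "y = f w" using finv B.pa_sub by blast
    have "(w, x) \<in> arcs N" using arc[OF w(1) assms] y w(2) unfolding pa_def by simp
    thus "y \<in> f ` pa N x" using w unfolding pa_def by simp
  qed
next
  show "f ` pa N x \<subseteq> pa N' (f x)"
  proof
    fix y assume "y \<in> f ` pa N x"
    then obtain w where w: "(w, x) \<in> arcs N" "y = f w" unfolding pa_def by auto
    have "w \<in> nodes N" using A.arcV1[OF w(1)] .
    thus "y \<in> pa N' (f x)" using arc[OF _ assms] w unfolding pa_def by simp
  qed
qed

lemma card_f: "S \<subseteq> nodes N \<Longrightarrow> card (f ` S) = card S"
  using inj inj_on_subset card_image by metis

lemma indeg_f: "x \<in> nodes N \<Longrightarrow> indeg N' (f x) = indeg N x"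
  unfolding indeg_pa using pa_f card_f A.pa_sub by simp
lemma outdeg_f: "x \<in> nodes N \<Longrightarrow> outdeg N' (f x) = outdeg N x"
  unfolding outdeg_ch using ch_f card_f A.ch_sub by simp

lemma leaf_f: "x \<in> nodes N \<Longrightarrow> is_leaf N' (f x) \<longleftrightarrow> is_leaf N x"
  unfolding is_leaf_def using indeg_f outdeg_f fV by simp
lemma tree_f: "x \<in> nodes N \<Longrightarrow> is_tree_node N' (f x) \<longleftrightarrow> is_tree_node N x"
  unfolding is_tree_node_def using indeg_f outdeg_f fV by simp
lemma ret_f: "x \<in> nodes N \<Longrightarrow> is_reticulation N' (f x) \<longleftrightarrow> is_reticulation N x"
  unfolding is_reticulation_def using indeg_f outdeg_f fV by simp

lemma set_f: assumes "\<And>x. x \<in> nodes N \<Longrightarrow> Q' (f x) \<longleftrightarrow> Q x"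
  shows "{v \<in> nodes N'. Q' v} = f ` {v \<in> nodes N. Q v}"
proof
  show "{v \<in> nodes N'. Q' v} \<subseteq> f ` {v \<in> nodes N. Q v}"
  proof
    fix y assume "y \<in> {v \<in> nodes N'. Q' v}"
    then obtain x where "x \<in> nodes N" "y = f x" "Q' y" using finv by blast
    thus "y \<in> f ` {v \<in> nodes N. Q v}" using assms by blast
  qed
qed (use assms fV in auto)

lemma leafset_f: "leaf_set N' = f ` leaf_set N"
  unfolding leaf_set_def by (rule set_f) (rule leaf_f)
lemma retset_f: "ret_set N' = f ` ret_set N"
  unfolding ret_set_def by (rule set_f) (rule ret_f)
lemma VT_f: "VT N' = f ` VT N"
  unfolding VT_def by (rule set_f) (use leaf_f tree_f in blast)

lemma labels_f: "labels N' = labels N"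
  unfolding labels_def leafset_f using labf by (auto simp: image_image)

lemma ln_f: assumes "k \<in> labels N" shows "leaf_node N' k = f (leaf_node N k)"
proof -
  have l: "leaf_node N k \<in> leaf_set N" "lab N (leaf_node N k) = k" using A.ln[OF assms] by auto
  have "f (leaf_node N k) \<in> leaf_set N'" using l leafset_f by blast
  moreover have "lab N' (f (leaf_node N k)) = k" using labf l by simp
  ultimately show ?thesis using B.ln_lab by metis
qed

lemma np_f: assumes "x \<in> nodes N" "y \<in> nodes N" shows "npaths N' (f x) (f y) = npaths N x y"
proof -
  have "\<And>x. x \<in> nodes N \<Longrightarrow> npaths N' (f x) (f y) = (if x = y then 1 else (\<Sum>w\<in>ch N x. npaths N' (f w) (f y)))"
  proof -
    fix x assume x: "x \<in> nodes N"
    have e: "f x = f y \<longleftrightarrow> x = y" using inj x assms(2) unfolding inj_on_def by blast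
    have "(\<Sum>w\<in>ch N' (f x). npaths N' w (f y)) = (\<Sum>w\<in>ch N x. npaths N' (f w) (f y))"
    proof -
      have "inj_on f (ch N x)" using inj_on_subset[OF inj A.ch_sub] .
      thus ?thesis unfolding ch_f[OF x] by (simp add: sum.reindex comp_def)
    qed
    thus "npaths N' (f x) (f y) = (if x = y then 1 else (\<Sum>w\<in>ch N x. npaths N' (f w) (f y)))"
      using B.np_rec[OF fV[OF x]] e by simp
  qed
  from A.np_unique[OF this assms(1)] show ?thesis .
qed

lemma rp_f: assumes "x \<in> nodes N" shows "rp N' (f x) = rp N x"
proof -
  have "rp N' (f x) = (\<Sum>h\<in>ret_set N. npaths N' (f x) (f h))"
    unfolding rp_def retset_f using inj inj_on_subset[of f "nodes N" "ret_set N"]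
    by (subst sum.reindex) (auto simp: comp_def ret_set_def)
  also have "\<dots> = rp N x" unfolding rp_def
    by (rule sum.cong) (auto simp: np_f assms ret_set_def)
  finally show ?thesis .
qed

lemma co_f: assumes "x \<in> nodes N" shows "co N' (f x) = co N x"
proof
  fix k show "co N' (f x) k = co N x k"
  proof (cases "k \<in> labels N")
    case True
    have "leaf_node N k \<in> nodes N" using A.ln(1)[OF True] unfolding leaf_set_def by simp
    thus ?thesis unfolding co_def labels_f using True ln_f np_f assms by simp
  qed (simp add: co_def labels_f)
qed

lemma SR_f: "SR N' = SR N"
proof -
  have "VT N \<subseteq> nodes N" unfolding VT_def by auto
  hence i: "inj_on f (VT N)" using inj inj_on_subset by blast
  have "SR N' = image_mset (sg N' \<circ> f) (mset_set (VT N))"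
    unfolding SR_def VT_f image_mset_mset_set[OF i, symmetric] by (simp add: multiset.map_comp)
  also have "\<dots> = SR N" unfolding SR_def
    by (rule image_mset_cong) (use \<open>VT N \<subseteq> nodes N\<close> in \<open>auto simp: sg_def rp_f co_f A.fin_VT\<close>)
  finally show ?thesis .
qed

end




lemma trancl_sub: "r \<subseteq> s\<^sup>+ \<Longrightarrow> r\<^sup>+ \<subseteq> s\<^sup>+"
  by (metis trancl_mono_subset trancl_id trans_trancl)

context pn begin

lemma phylo_sub:
  assumes lab1: "lab N1 = lab N"
    and V1: "nodes N1 \<subseteq> nodes N"
    and A1V: "arcs N1 \<subseteq> nodes N1 \<times> nodes N1"
    and A1: "arcs N1 \<subseteq> (arcs N)\<^sup>+"
    and dg: "\<And>x. x \<in> nodes N1 \<Longrightarrow> card (pa N1 x) = card (pa N x) \<and> card (ch N1 x) = card (ch N x)"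
    and r1: "rt \<in> nodes N1"
  shows "phylo_network n N1"
    and "\<And>x. x \<in> nodes N1 \<Longrightarrow> is_leaf N1 x \<longleftrightarrow> is_leaf N x"
    and "\<And>x. x \<in> nodes N1 \<Longrightarrow> is_tree_node N1 x \<longleftrightarrow> is_tree_node N x"
    and "\<And>x. x \<in> nodes N1 \<Longrightarrow> is_reticulation N1 x \<longleftrightarrow> is_reticulation N x"
    and "\<And>x. x \<in> nodes N1 \<Longrightarrow> is_root N1 x \<longleftrightarrow> is_root N x"
proof -
  have ir: "\<And>x. x \<in> nodes N1 \<Longrightarrow> is_root N1 x \<longleftrightarrow> is_root N x"
    unfolding is_root_def indeg_pa outdeg_ch using dg V1 by auto
  have il: "\<And>x. x \<in> nodes N1 \<Longrightarrow> is_leaf N1 x \<longleftrightarrow> is_leaf N x"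
    unfolding is_leaf_def indeg_pa outdeg_ch using dg V1 by auto
  have it: "\<And>x. x \<in> nodes N1 \<Longrightarrow> is_tree_node N1 x \<longleftrightarrow> is_tree_node N x"
    unfolding is_tree_node_def indeg_pa outdeg_ch using dg V1 by auto
  have ih: "\<And>x. x \<in> nodes N1 \<Longrightarrow> is_reticulation N1 x \<longleftrightarrow> is_reticulation N x"
    unfolding is_reticulation_def indeg_pa outdeg_ch using dg V1 by auto
  show "\<And>x. x \<in> nodes N1 \<Longrightarrow> is_leaf N1 x \<longleftrightarrow> is_leaf N x" using il .
  show "\<And>x. x \<in> nodes N1 \<Longrightarrow> is_tree_node N1 x \<longleftrightarrow> is_tree_node N x" using it .
  show "\<And>x. x \<in> nodes N1 \<Longrightarrow> is_reticulation N1 x \<longleftrightarrow> is_reticulation N x" using ih .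
  show "\<And>x. x \<in> nodes N1 \<Longrightarrow> is_root N1 x \<longleftrightarrow> is_root N x" using ir .
  have fin: "finite (nodes N1)" using finV V1 finite_subset by blast
  have ac: "acyclic (arcs N1)"
  proof -
    have "(arcs N1)\<^sup>+ \<subseteq> (arcs N)\<^sup>+" using trancl_sub[OF A1] .
    thus ?thesis using acyc unfolding acyclic_def by blast
  qed
  have root: "\<exists>!r. is_root N1 r"
  proof
    show "is_root N1 rt" using ir[OF r1] rt by simp
  next
    fix r assume "is_root N1 r"
    moreover hence "r \<in> nodes N1" unfolding is_root_def by simp
    ultimately show "r = rt" using ir rt_uniq by blast
  qed
  have cl: "\<forall>v\<in>nodes N1. is_root N1 v \<or> is_leaf N1 v \<or> is_tree_node N1 v \<or> is_reticulation N1 v"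
    using classify ir il it ih V1 by blast
  have ls: "leaf_set N1 \<subseteq> leaf_set N" unfolding leaf_set_def using il V1 by auto
  have inj1: "inj_on (lab N1) (leaf_set N1)" using inj_lab ls lab1 inj_on_subset by metis
  have "labels N1 \<subseteq> labels N" unfolding labels_def lab1 using ls by auto
  hence lb: "labels N1 \<subseteq> {1..n}" using labels_n by blast
  show "phylo_network n N1" unfolding phylo_network_def using fin A1V ac root cl inj1 lb by blast
qed


lemma not_tree_leaf: "is_leaf N x \<Longrightarrow> \<not> is_tree_node N x" unfolding is_leaf_def is_tree_node_def by simp
lemma not_leaf_tree: "is_tree_node N x \<Longrightarrow> \<not> is_leaf N x" unfolding is_leaf_def is_tree_node_def by simp

lemma parent_eq: "pa N x = {p} \<Longrightarrow> parent N x = p"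
  unfolding parent_def pa_def by (rule the_equality) auto

end

definition redC :: "'a net \<Rightarrow> 'a \<Rightarrow> 'a \<Rightarrow> 'a \<Rightarrow> 'a \<Rightarrow> 'a net" where
  "redC N li lj p g = N\<lparr>nodes := nodes N - {li, p}, arcs := (arcs N - {(g,p),(p,li),(p,lj)}) \<union> {(g,lj)}\<rparr>"

definition dl :: "nat \<Rightarrow> nat \<Rightarrow> nat" where "dl i = (\<lambda>k. if k = i then 1 else 0)"
definition dl2 :: "nat \<Rightarrow> nat \<Rightarrow> nat \<Rightarrow> nat" where "dl2 i j = (\<lambda>k. if k = i \<or> k = j then 1 else 0)"

definition cmap :: "nat \<Rightarrow> nat \<times> (nat \<Rightarrow> nat) \<Rightarrow> nat \<times> (nat \<Rightarrow> nat)" where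
  "cmap k s = (fst s, (snd s)(k := 0))"

locale cherry = pn +
  fixes i j :: nat and li lj p g :: 'a
  assumes ij: "i \<noteq> j"
  and li: "li = leaf_node N i" and lj: "lj = leaf_node N j"
  and il: "i \<in> labels N" and jl: "j \<in> labels N"
  and pli: "pa N li = {p}" and plj: "pa N lj = {p}"
  and chp: "ch N p = {li, lj}" and pp: "pa N p = {g}"
begin

lemma li_leaf: "li \<in> leaf_set N" "lab N li = i" using ln[OF il] li by auto
lemma lj_leaf: "lj \<in> leaf_set N" "lab N lj = j" using ln[OF jl] lj by auto
lemma is_li: "is_leaf N li" using li_leaf leaf_set_iff by auto
lemma is_lj: "is_leaf N lj" using lj_leaf leaf_set_iff by auto
lemma lilj: "li \<noteq> lj" using li_leaf lj_leaf ij by auto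
lemma ap: "(u, p) \<in> arcs N \<longleftrightarrow> u = g" using pp unfolding pa_def by auto
lemma pa': "(p, w) \<in> arcs N \<longleftrightarrow> w = li \<or> w = lj" using chp unfolding ch_def by auto
lemma ali: "(u, li) \<in> arcs N \<longleftrightarrow> u = p" using pli unfolding pa_def by auto
lemma alj: "(u, lj) \<in> arcs N \<longleftrightarrow> u = p" using plj unfolding pa_def by auto
lemma chli: "(li, w) \<notin> arcs N" using leafD(1)[OF is_li] unfolding ch_def by auto
lemma chlj: "(lj, w) \<notin> arcs N" using leafD(1)[OF is_lj] unfolding ch_def by auto
lemma pV: "p \<in> nodes N" using arcV1 pa' by blast
lemma gV: "g \<in> nodes N" using arcV1 ap by blast
lemma liV: "li \<in> nodes N" using arcV2 pa' by blast
lemma ljV: "lj \<in> nodes N" using arcV2 pa' by blast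
lemma gp: "g \<noteq> p" using irr ap by blast
lemma pli_ne: "p \<noteq> li" "p \<noteq> lj" using chli chlj pa' by blast+
lemma gli: "g \<noteq> li" "g \<noteq> lj" using chli chlj ap by blast+
lemma tree_p: "is_tree_node N p"
  unfolding is_tree_node_def indeg_pa outdeg_ch using pV chp pp lilj by simp

lemma reduce_eq: "reduce N (i, j) = redC N li lj p g"
proof -
  have c: "is_cherry N (i, j)" unfolding is_cherry_def
    using ij il jl parent_eq[OF pli] parent_eq[OF plj] li lj by simp
  have e: "{e \<in> arcs N - {(p, li)}. fst e \<noteq> p \<and> snd e \<noteq> p} \<union>
       {(u, w) |u w. (u, p) \<in> arcs N - {(p, li)} \<and> (p, w) \<in> arcs N - {(p, li)}}
     = (arcs N - {(g,p),(p,li),(p,lj)}) \<union> {(g,lj)}"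
  proof -
    have 1: "{(u, w) |u w. (u, p) \<in> arcs N - {(p, li)} \<and> (p, w) \<in> arcs N - {(p, li)}} = {(g, lj)}"
      using ap pa' lilj pli_ne gp by auto
    have 2: "{e \<in> arcs N - {(p, li)}. fst e \<noteq> p \<and> snd e \<noteq> p} = arcs N - {(g,p),(p,li),(p,lj)}"
    proof
      show "{e \<in> arcs N - {(p, li)}. fst e \<noteq> p \<and> snd e \<noteq> p} \<subseteq> arcs N - {(g,p),(p,li),(p,lj)}"
        by auto
      show "arcs N - {(g,p),(p,li),(p,lj)} \<subseteq> {e \<in> arcs N - {(p, li)}. fst e \<noteq> p \<and> snd e \<noteq> p}"
      proof
        fix e assume e: "e \<in> arcs N - {(g,p),(p,li),(p,lj)}"
        obtain a b where ab: "e = (a, b)" by fastforce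
        have "a \<noteq> p" using e ab pa' by auto
        moreover have "b \<noteq> p" using e ab ap by auto
        ultimately show "e \<in> {e \<in> arcs N - {(p, li)}. fst e \<noteq> p \<and> snd e \<noteq> p}" using e ab by auto
      qed
    qed
    show ?thesis using 1 2 by simp
  qed
  have n: "nodes N - {li} - {p} = nodes N - {li, p}" by auto
  show ?thesis unfolding reduce_def redC_def suppress_def Let_def
    using c li[symmetric] lj[symmetric] parent_eq[OF pli] parent_eq[OF plj] e n by simp
qed

abbreviation "N1 \<equiv> redC N li lj p g"

lemma N1_simps: "nodes N1 = nodes N - {li, p}" "arcs N1 = (arcs N - {(g,p),(p,li),(p,lj)}) \<union> {(g,lj)}"
  "lab N1 = lab N"
  unfolding redC_def by simp_all

lemma ch1: assumes "x \<in> nodes N1" shows "ch N1 x = (if x = g then insert lj (ch N x - {p}) else ch N x)"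
  using assms unfolding ch_def N1_simps using pa' by auto

lemma pa1: assumes "x \<in> nodes N1" shows "pa N1 x = (if x = lj then {g} else pa N x)"
  using assms unfolding pa_def N1_simps using ap ali alj by auto

lemma lj_ch_g: "lj \<notin> ch N g" "p \<in> ch N g" using alj gp ap unfolding ch_def by auto

lemma V1: "g \<in> nodes N1" "lj \<in> nodes N1" "rt \<in> nodes N1"
proof -
  show "g \<in> nodes N1" using gV gli gp unfolding N1_simps by auto
  show "lj \<in> nodes N1" using ljV lilj pli_ne unfolding N1_simps by auto
  have "rt \<noteq> li" using rt is_li unfolding is_root_def is_leaf_def by auto
  moreover have "rt \<noteq> p" using rt tree_p unfolding is_root_def is_tree_node_def by auto
  ultimately show "rt \<in> nodes N1" using rt unfolding N1_simps is_root_def by auto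
qed

lemma dg1: assumes "x \<in> nodes N1" shows "card (pa N1 x) = card (pa N x) \<and> card (ch N1 x) = card (ch N x)"
proof
  show "card (pa N1 x) = card (pa N x)" using pa1[OF assms] plj by simp
  show "card (ch N1 x) = card (ch N x)"
  proof (cases "x = g")
    case True
    have "card (insert lj (ch N g - {p})) = Suc (card (ch N g - {p}))"
      using lj_ch_g fin_ch by simp
    also have "\<dots> = card (ch N g)" using lj_ch_g fin_ch
      by (metis card_Suc_Diff1)
    finally show ?thesis using ch1[OF assms] True by simp
  next
    case False thus ?thesis using ch1[OF assms] by simp
  qed
qed

lemma A1V: "arcs N1 \<subseteq> nodes N1 \<times> nodes N1"
proof
  fix e assume e: "e \<in> arcs N1"
  show "e \<in> nodes N1 \<times> nodes N1"
  proof (cases "e = (g, lj)")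
    case True thus ?thesis using V1 by simp
  next
    case False
    obtain a b where ab0: "e = (a,b)" by fastforce
    have ab: "e = (a,b)" "(a,b) \<in> arcs N" "(a,b) \<notin> {(g,p),(p,li),(p,lj)}"
      using e False ab0 unfolding N1_simps by auto
    have "a \<noteq> p" using ab pa' by auto
    moreover have "b \<noteq> p" using ab ap by auto
    moreover have "a \<noteq> li" using ab chli by auto
    moreover have "b \<noteq> li" using ab ali by auto
    ultimately show ?thesis using ab arcV1 arcV2 unfolding N1_simps by auto
  qed
qed

lemma A1T: "arcs N1 \<subseteq> (arcs N)\<^sup>+"
proof
  fix e assume e: "e \<in> arcs N1"
  show "e \<in> (arcs N)\<^sup>+"
  proof (cases "e = (g, lj)")
    case True
    have "(g, p) \<in> arcs N" "(p, lj) \<in> arcs N" using ap pa' by auto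
    thus ?thesis using True by auto
  next
    case False hence "e \<in> arcs N" using e unfolding N1_simps by auto
    thus ?thesis by (rule r_into_trancl')
  qed
qed

lemma N1_sub: "nodes N1 \<subseteq> nodes N" unfolding N1_simps by auto

lemmas PS1 = phylo_sub[of N1, OF N1_simps(3) N1_sub A1V A1T dg1 V1(3)]

lemma pn1: "pn n N1" using PS1(1) by unfold_locales

lemma np1: assumes "x \<in> nodes N1" "y \<in> nodes N1" shows "npaths N1 x y = npaths N x y"
proof -
  have "\<And>x. x \<in> nodes N1 \<Longrightarrow> npaths N x y = (if x = y then 1 else (\<Sum>w\<in>ch N1 x. npaths N w y))"
  proof -
    fix x assume x: "x \<in> nodes N1"
    have xV: "x \<in> nodes N" using x N1_sub by auto
    show "npaths N x y = (if x = y then 1 else (\<Sum>w\<in>ch N1 x. npaths N w y))"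
    proof (cases "x = y")
      case True thus ?thesis using np_rec[OF xV] by simp
    next
      case False
      show ?thesis
      proof (cases "x = g")
        case True
        have yp: "y \<noteq> p" "y \<noteq> li" using assms(2) unfolding N1_simps by auto
        have "npaths N p y = npaths N li y + npaths N lj y" using np_rec[OF pV] chp lilj yp by simp
        also have "npaths N li y = 0" using np_leaf[OF is_li] yp by simp
        finally have pe: "npaths N p y = npaths N lj y" by simp
        have "(\<Sum>w\<in>ch N1 x. npaths N w y) = npaths N lj y + (\<Sum>w\<in>ch N g - {p}. npaths N w y)"
          using ch1[OF x] True lj_ch_g fin_ch by simp
        also have "\<dots> = (\<Sum>w\<in>ch N g. npaths N w y)"
          using pe lj_ch_g fin_ch by (simp add: sum.remove)
        finally show ?thesis using np_rec[OF xV] False True by simp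
      next
        case xg: False
        thus ?thesis using np_rec[OF xV] False ch1[OF x] by simp
      qed
    qed
  qed
  from pn.np_unique[OF pn1 this assms(1)] show ?thesis by simp
qed

lemma is1: assumes "x \<in> nodes N1"
  shows "is_leaf N1 x \<longleftrightarrow> is_leaf N x" "is_tree_node N1 x \<longleftrightarrow> is_tree_node N x"
    "is_reticulation N1 x \<longleftrightarrow> is_reticulation N x"
  using PS1(2-4) assms by auto

lemma leaf1: "leaf_set N1 = leaf_set N - {li}"
  using is1(1) tree_p not_tree_leaf unfolding leaf_set_def N1_simps by auto

lemma ret1: "ret_set N1 = ret_set N"
proof -
  have "\<not> is_reticulation N li" "\<not> is_reticulation N p"
    using is_li tree_p unfolding is_leaf_def is_reticulation_def is_tree_node_def by auto
  thus ?thesis using is1(3) unfolding ret_set_def N1_simps by auto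
qed

lemma VT1: "VT N1 = VT N - {li, p}"
  using is1(1,2) unfolding VT_def N1_simps by auto

lemma labels1: "labels N1 = labels N - {i}"
proof -
  have "labels N1 = lab N ` (leaf_set N - {li})" unfolding labels_def leaf1 N1_simps ..
  also have "\<dots> = lab N ` leaf_set N - {lab N li}"
    using inj_lab li_leaf by (simp add: inj_on_image_set_diff)
  finally show ?thesis using li_leaf unfolding labels_def by simp
qed

lemma ln1: assumes "k \<in> labels N1" shows "leaf_node N1 k = leaf_node N k"
proof -
  have k: "k \<in> labels N" "k \<noteq> i" using assms labels1 by auto
  have "leaf_node N k \<noteq> li" using ln(2)[OF k(1)] li_leaf(2) k(2) by metis
  hence "leaf_node N k \<in> leaf_set N1" unfolding leaf1 using ln(1)[OF k(1)] by simp
  moreover have "lab N1 (leaf_node N k) = k" using ln(2)[OF k(1)] N1_simps by simp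
  ultimately show ?thesis using pn.ln_lab[OF pn1, of "leaf_node N k"] by simp
qed

lemma rp1: assumes "x \<in> nodes N1" shows "rp N1 x = rp N x"
proof -
  have "ret_set N \<subseteq> nodes N1" using ret1 unfolding ret_set_def by auto
  thus ?thesis unfolding rp_def ret1 using np1 assms by (intro sum.cong) auto
qed

lemma co1: assumes "x \<in> nodes N1" shows "co N1 x = (co N x)(i := 0)"
proof
  fix k show "co N1 x k = ((co N x)(i := 0)) k"
  proof (cases "k \<in> labels N1")
    case True
    have "leaf_node N1 k \<in> nodes N1" using pn.ln(1)[OF pn1 True] unfolding leaf_set_def by simp
    thus ?thesis using True labels1 ln1 np1 assms unfolding co_def by auto
  next
    case False thus ?thesis using labels1 unfolding co_def by auto
  qed
qed

lemma sg_li: "sg N li = (0, dl i)"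
  unfolding sg_def dl_def using leaf_rp[OF is_li] co_leaf[OF is_li] li_leaf by auto

lemma sg_p: "sg N p = (0, dl2 i j)"
proof -
  have r: "rp N p = 0" using rp_rec[OF pV] chp lilj leaf_rp[OF is_li] leaf_rp[OF is_lj] tree_p
    unfolding is_tree_node_def is_reticulation_def by simp
  have "co N p = dl2 i j"
  proof
    fix k show "co N p k = dl2 i j k"
    proof (cases "k \<in> labels N")
      case True
      have lk: "leaf_node N k \<in> leaf_set N" "lab N (leaf_node N k) = k" using ln[OF True] by auto
      have "leaf_node N k \<noteq> p" using lk(1) leaf_set_iff tree_p not_tree_leaf by auto
      hence "npaths N p (leaf_node N k) = npaths N li (leaf_node N k) + npaths N lj (leaf_node N k)"
        using np_rec[OF pV] chp lilj by simp
      moreover have "li = leaf_node N k \<longleftrightarrow> k = i"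
      proof
        assume "li = leaf_node N k" thus "k = i" using lk(2) li_leaf(2) by simp
      next
        assume "k = i" thus "li = leaf_node N k" using li by simp
      qed
      moreover have "lj = leaf_node N k \<longleftrightarrow> k = j"
      proof
        assume "lj = leaf_node N k" thus "k = j" using lk(2) lj_leaf(2) by simp
      next
        assume "k = j" thus "lj = leaf_node N k" using lj by simp
      qed
      ultimately show ?thesis unfolding co_def dl2_def using True np_leaf[OF is_li] np_leaf[OF is_lj] ij by auto
    next
      case False thus ?thesis unfolding co_def dl2_def using il jl by auto
    qed
  qed
  thus ?thesis using r unfolding sg_def by simp
qed


lemma SR1: "SR N1 = image_mset (cmap i) (SR N - {#(0, dl i), (0, dl2 i j)#})"
proof -
  have VTs: "{li, p} \<subseteq> VT N" using is_li tree_p liV pV unfolding VT_def by auto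
  have "mset_set (VT N1) = mset_set (VT N) - mset_set {li, p}"
    unfolding VT1 using mset_set_Diff[OF fin_VT VTs] .
  moreover have "mset_set {li, p} = {#li, p#}" using pli_ne by simp
  ultimately have m: "mset_set (VT N1) = mset_set (VT N) - {#li, p#}" by simp
  have sub: "{#li, p#} \<subseteq># mset_set (VT N)" using VTs fin_VT pli_ne
    by (metis \<open>mset_set {li, p} = {#li, p#}\<close> mset_set_set_mset_msubset msubset_mset_set_iff finite.emptyI finite.insertI)
  have "SR N1 = image_mset (sg N1) (mset_set (VT N) - {#li, p#})" unfolding SR_def m ..
  also have "\<dots> = image_mset (cmap i \<circ> sg N) (mset_set (VT N) - {#li, p#})"
  proof (rule image_mset_cong)
    fix x assume "x \<in># mset_set (VT N) - {#li, p#}"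
    hence "x \<in> VT N1" using m fin_VT pn.fin_VT[OF pn1] by (metis elem_mset_set)
    hence x: "x \<in> nodes N1" unfolding VT_def by simp
    show "sg N1 x = (cmap i \<circ> sg N) x" unfolding sg_def cmap_def using rp1[OF x] co1[OF x] by simp
  qed
  also have "\<dots> = image_mset (cmap i) (image_mset (sg N) (mset_set (VT N) - {#li, p#}))"
    by (simp add: multiset.map_comp)
  also have "image_mset (sg N) (mset_set (VT N) - {#li, p#}) = SR N - {#(0, dl i), (0, dl2 i j)#}"
    unfolding SR_def image_mset_Diff[OF sub] by (simp add: sg_li sg_p)
  finally show ?thesis .
qed


lemma A_dec: "arcs N = (arcs N1 - {(g,lj)}) \<union> {(g,p),(p,li),(p,lj)}"
proof -
  have "(g, lj) \<notin> arcs N" using alj gp by simp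
  moreover have "(g,p) \<in> arcs N" "(p,li) \<in> arcs N" "(p,lj) \<in> arcs N" using ap pa' by auto
  moreover have "(g, lj) \<noteq> (g, p)" "(g, lj) \<noteq> (p, li)" "(g, lj) \<noteq> (p, lj)" using pli_ne gp by auto
  ultimately show ?thesis unfolding N1_simps by blast
qed

end


lemma lift_iso:
  fixes N N1 :: "'a net" and N' N1' :: "'b net" and f :: "'a \<Rightarrow> 'b"
  assumes b1: "bij_betw f (nodes N1) (nodes N1')"
    and a1: "\<And>u v. u \<in> nodes N1 \<Longrightarrow> v \<in> nodes N1 \<Longrightarrow> (u, v) \<in> arcs N1 \<longleftrightarrow> (f u, f v) \<in> arcs N1'"
    and l1: "\<And>v. v \<in> leaf_set N1 \<Longrightarrow> lab N1' (f v) = lab N1 v"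
    and V: "nodes N = nodes N1 \<union> X" "nodes N1 \<inter> X = {}"
    and V': "nodes N' = nodes N1' \<union> X'" "nodes N1' \<inter> X' = {}"
    and bX: "bij_betw f X X'"
    and A1V: "arcs N1 \<subseteq> nodes N1 \<times> nodes N1" and A1V': "arcs N1' \<subseteq> nodes N1' \<times> nodes N1'"
    and A: "arcs N = (arcs N1 - R) \<union> S" and A': "arcs N' = (arcs N1' - map_prod f f ` R) \<union> map_prod f f ` S"
    and RS: "R \<subseteq> nodes N \<times> nodes N" "S \<subseteq> nodes N \<times> nodes N"
    and L: "\<And>v. v \<in> leaf_set N \<Longrightarrow> v \<notin> X \<Longrightarrow> v \<in> leaf_set N1"
    and LX: "\<And>v. v \<in> leaf_set N \<Longrightarrow> v \<in> X \<Longrightarrow> lab N' (f v) = lab N v"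
    and lab1: "lab N1 = lab N" and lab1': "lab N1' = lab N'"
  shows "net_iso N N'"
proof -
  have b: "bij_betw f (nodes N) (nodes N')" unfolding V V' using bij_betw_combine[OF b1 bX] V'(2) by blast
  have inj: "inj_on f (nodes N)" using bij_betw_imp_inj_on[OF b] .
  have fX: "\<And>x. x \<in> X \<Longrightarrow> f x \<notin> nodes N1'" using bX V'(2) unfolding bij_betw_def by blast
  have a1': "\<And>u v. u \<in> nodes N \<Longrightarrow> v \<in> nodes N \<Longrightarrow> (f u, f v) \<in> arcs N1' \<longleftrightarrow> (u, v) \<in> arcs N1"
  proof -
    fix u v assume uv: "u \<in> nodes N" "v \<in> nodes N"
    show "(f u, f v) \<in> arcs N1' \<longleftrightarrow> (u, v) \<in> arcs N1"
    proof (cases "u \<in> nodes N1 \<and> v \<in> nodes N1")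
      case True thus ?thesis using a1 by simp
    next
      case False
      hence "u \<in> X \<or> v \<in> X" using uv V by auto
      hence "f u \<notin> nodes N1' \<or> f v \<notin> nodes N1'" using fX by auto
      thus ?thesis using False A1V A1V' by auto
    qed
  qed
  have mp: "\<And>u v T. T \<subseteq> nodes N \<times> nodes N \<Longrightarrow> u \<in> nodes N \<Longrightarrow> v \<in> nodes N \<Longrightarrow>
      (f u, f v) \<in> map_prod f f ` T \<longleftrightarrow> (u, v) \<in> T"
  proof -
    fix u v T assume T: "T \<subseteq> nodes N \<times> nodes N" and uv: "u \<in> nodes N" "v \<in> nodes N"
    show "(f u, f v) \<in> map_prod f f ` T \<longleftrightarrow> (u, v) \<in> T"
    proof
      assume "(f u, f v) \<in> map_prod f f ` T"
      then obtain a b where ab: "(a, b) \<in> T" "f u = f a" "f v = f b" by auto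
      have "a \<in> nodes N" "b \<in> nodes N" using ab T by auto
      hence "u = a" "v = b" using inj uv ab unfolding inj_on_def by auto
      thus "(u, v) \<in> T" using ab by simp
    qed force
  qed
  have arcs: "\<forall>u\<in>nodes N. \<forall>v\<in>nodes N. (u, v) \<in> arcs N \<longleftrightarrow> (f u, f v) \<in> arcs N'"
    unfolding A A' using a1' mp RS by auto
  have labs: "\<forall>v\<in>leaf_set N. lab N' (f v) = lab N v"
  proof
    fix v assume v: "v \<in> leaf_set N"
    show "lab N' (f v) = lab N v"
    proof (cases "v \<in> X")
      case True thus ?thesis using LX v by simp
    next
      case False thus ?thesis using L v l1 lab1 lab1' by metis
    qed
  qed
  show ?thesis unfolding net_iso_def using b arcs labs by blast
qed

context pn begin

lemma pn_self: "pn n N" by (rule pn_axioms)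

lemma leaf_parent: assumes "k \<in> labels N" obtains q where "pa N (leaf_node N k) = {q}" "parent N (leaf_node N k) = q"
proof -
  have "is_leaf N (leaf_node N k)" using ln(1)[OF assms] leaf_set_iff by simp
  then obtain q where "pa N (leaf_node N k) = {q}" using leafD(2) by blast
  thus ?thesis using that parent_eq by blast
qed

lemma ch_not_leaf: "(x, w) \<in> arcs N \<Longrightarrow> \<not> is_leaf N x"
  using leafD(1) unfolding ch_def by blast

lemma cherry_ex: assumes "is_cherry N (i, j)" shows "\<exists>li lj p g. cherry n N i j li lj p g"
proof -
  have ij: "i \<noteq> j" "i \<in> labels N" "j \<in> labels N" and par: "parent N (leaf_node N i) = parent N (leaf_node N j)"
    using assms unfolding is_cherry_def by auto
  obtain a where a: "pa N (leaf_node N i) = {a}" "parent N (leaf_node N i) = a" using leaf_parent[OF ij(2)] by blast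
  obtain b where b: "pa N (leaf_node N j) = {b}" "parent N (leaf_node N j) = b" using leaf_parent[OF ij(3)] by blast
  have ab: "a = b" using a b par by simp
  have ne: "leaf_node N i \<noteq> leaf_node N j" using ln(2)[OF ij(2)] ln(2)[OF ij(3)] ij(1) by metis
  have sub: "{leaf_node N i, leaf_node N j} \<subseteq> ch N a" using a b ab unfolding pa_def ch_def by auto
  have aV: "a \<in> nodes N" using a(1) pa_sub by auto
  have nl: "\<not> is_leaf N a" using sub leafD(1) by auto
  have "\<not> is_root N a" "\<not> is_reticulation N a"
  proof -
    { fix c assume "ch N a = {c}" hence False using sub ne by auto }
    thus "\<not> is_root N a" "\<not> is_reticulation N a" using rootD(1) retD(1) by blast+
  qed
  hence t: "is_tree_node N a" using classify[OF aV] nl by blast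
  obtain x y where xy: "x \<noteq> y" "ch N a = {x, y}" using treeD(1)[OF t] by blast
  have chs: "ch N a = {leaf_node N i, leaf_node N j}" using sub xy ne by auto
  obtain g where g: "pa N a = {g}" using treeD(2)[OF t] by blast
  have "cherry n N i j (leaf_node N i) (leaf_node N j) a g"
    by (rule cherry.intro[OF pn_self]) (unfold_locales, use ij a b ab chs g in auto)
  thus ?thesis by blast
qed

lemma sum_dl: assumes "i \<in> {1..n}" shows "(\<Sum>k\<in>{1..n}. dl i k) = 1"
  unfolding dl_def using assms by (simp add: sum.delta)

lemma sum_dl2: assumes "i \<in> {1..n}" "j \<in> {1..n}" "i \<noteq> j" shows "(\<Sum>k\<in>{1..n}. dl2 i j k) = 2"
proof -
  have "dl2 i j = (\<lambda>k. dl i k + dl j k)" unfolding dl2_def dl_def using assms(3) by auto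
  thus ?thesis using sum_dl assms by (simp add: sum.distrib)
qed

lemma nonroot_child: "(x, c) \<in> arcs N \<Longrightarrow> \<not> is_root N c"
  using rootD(2) unfolding pa_def by blast

lemma lp1_cases: assumes "(x, c) \<in> arcs N" "lp N c = 1"
  shows "is_leaf N c \<or> is_reticulation N c"
proof -
  have cV: "c \<in> nodes N" using arcV2 assms(1) .
  have "\<not> is_tree_node N c" using tree_lp assms(2) by fastforce
  thus ?thesis using classify[OF cV] nonroot_child[OF assms(1)] by blast
qed

lemma ret_rp: "is_reticulation N c \<Longrightarrow> rp N c \<ge> 1"
  using rp_rec unfolding is_reticulation_def by simp

lemma leaf_par: assumes "is_leaf N c" "(x, c) \<in> arcs N" shows "pa N c = {x}"
proof -
  obtain q where "pa N c = {q}" using leafD(2)[OF assms(1)] by blast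
  thus ?thesis using assms(2) unfolding pa_def by auto
qed

lemma co_np: "k \<in> labels N \<Longrightarrow> co N x k = npaths N x (leaf_node N k)" unfolding co_def by simp

lemma co_pos_label: "co N x k \<noteq> 0 \<Longrightarrow> k \<in> labels N" unfolding co_def by (auto split: if_splits)

lemma ln_leaf: "k \<in> labels N \<Longrightarrow> is_leaf N (leaf_node N k)" using ln(1) leaf_set_iff by blast

lemma tree_two_children:
  assumes "x \<in> VT N" "lp N x = 2"
  obtains a b where "a \<noteq> b" "ch N x = {a, b}" "lp N a = 1" "lp N b = 1" "is_tree_node N x"
    "rp N x = rp N a + rp N b"
    "\<And>y. y \<noteq> x \<Longrightarrow> npaths N x y = npaths N a y + npaths N b y"
proof -
  have xV: "x \<in> nodes N" using assms(1) unfolding VT_def by simp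
  have t: "is_tree_node N x" using assms leaf_lp unfolding VT_def by auto
  obtain a b where ab: "a \<noteq> b" "ch N x = {a, b}" using treeD(1)[OF t] by blast
  have nl: "\<not> is_leaf N x" "\<not> is_reticulation N x" using t unfolding is_tree_node_def is_leaf_def is_reticulation_def by auto
  have "a \<in> nodes N" "b \<in> nodes N" using ab ch_sub by auto
  hence ge: "lp N a \<ge> 1" "lp N b \<ge> 1" using lp_ge1 by auto
  have "lp N x = lp N a + lp N b" using lp_rec[OF xV] nl ab by simp
  hence "lp N a = 1" "lp N b = 1" using ge assms(2) by auto
  moreover have "rp N x = rp N a + rp N b" using rp_rec[OF xV] nl ab by simp
  moreover have "\<And>y. y \<noteq> x \<Longrightarrow> npaths N x y = npaths N a y + npaths N b y" using np_rec[OF xV] ab by simp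
  ultimately show ?thesis using that ab t by blast
qed

lemma cherry_detect:
  assumes x: "x \<in> VT N" and s: "sg N x = (0, dl2 i j)" and ij: "i \<noteq> j" "i \<in> {1..n}" "j \<in> {1..n}"
  shows "is_cherry N (i, j)"
proof -
  have cx: "co N x = dl2 i j" "rp N x = 0" using s unfolding sg_def by auto
  have "lp N x = 2" using lp_co_n cx sum_dl2 ij by simp
  then obtain a b where ab: "a \<noteq> b" "ch N x = {a, b}" "lp N a = 1" "lp N b = 1" "is_tree_node N x"
    "rp N x = rp N a + rp N b" "\<And>y. y \<noteq> x \<Longrightarrow> npaths N x y = npaths N a y + npaths N b y"
    using tree_two_children x by blast
  have arcs: "(x, a) \<in> arcs N" "(x, b) \<in> arcs N" using ab(2) unfolding ch_def by auto
  have la: "is_leaf N a" using lp1_cases[OF arcs(1) ab(3)] ret_rp ab(6) cx(2) by fastforce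
  have lb: "is_leaf N b" using lp1_cases[OF arcs(2) ab(4)] ret_rp ab(6) cx(2) by fastforce
  have key: "\<And>k. co N x k = 1 \<Longrightarrow> k \<in> labels N \<and> (leaf_node N k = a \<or> leaf_node N k = b)"
  proof -
    fix k assume k1: "co N x k = 1"
    hence kl: "k \<in> labels N" using co_pos_label[of x k] by simp
    have "leaf_node N k \<noteq> x" using ln_leaf[OF kl] ab(5) not_leaf_tree by blast
    hence "co N x k = npaths N a (leaf_node N k) + npaths N b (leaf_node N k)" using co_np[OF kl] ab(7) by simp
    hence s1: "npaths N a (leaf_node N k) + npaths N b (leaf_node N k) = 1" using k1 by simp
    have "leaf_node N k = a \<or> leaf_node N k = b"
    proof (rule ccontr)
      assume "\<not> (leaf_node N k = a \<or> leaf_node N k = b)"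
      hence "a \<noteq> leaf_node N k" "b \<noteq> leaf_node N k" by auto
      hence "npaths N a (leaf_node N k) = 0" "npaths N b (leaf_node N k) = 0"
        using np_leaf[OF la, of "leaf_node N k"] np_leaf[OF lb, of "leaf_node N k"] by auto
      thus False using s1 by simp
    qed
    thus "k \<in> labels N \<and> (leaf_node N k = a \<or> leaf_node N k = b)" using kl by simp
  qed
  have "co N x i = 1" "co N x j = 1" using cx unfolding dl2_def by auto
  hence ki: "i \<in> labels N" "leaf_node N i = a \<or> leaf_node N i = b"
    and kj: "j \<in> labels N" "leaf_node N j = a \<or> leaf_node N j = b" using key by auto
  have "parent N a = x" "parent N b = x" using leaf_par[OF la arcs(1)] leaf_par[OF lb arcs(2)] parent_eq by auto
  hence "parent N (leaf_node N i) = x" "parent N (leaf_node N j) = x" using ki(2) kj(2) by auto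
  thus ?thesis unfolding is_cherry_def using ij(1) ki(1) kj(1) by simp
qed

end

lemma cherry_lift:
  assumes C: "cherry n N i j li lj p g" and C': "cherry n N' i j li' lj' p' g'"
    and I: "net_iso (redC N li lj p g) (redC N' li' lj' p' g')"
  shows "net_iso N N'"
proof -
  interpret C: cherry n N i j li lj p g by (rule C)
  interpret D: cherry n N' i j li' lj' p' g' by (rule C')
  obtain f1 where f1: "bij_betw f1 (nodes (redC N li lj p g)) (nodes (redC N' li' lj' p' g'))"
    "\<forall>u\<in>nodes (redC N li lj p g). \<forall>v\<in>nodes (redC N li lj p g).
       (u, v) \<in> arcs (redC N li lj p g) \<longleftrightarrow> (f1 u, f1 v) \<in> arcs (redC N' li' lj' p' g')"
    "\<forall>v\<in>leaf_set (redC N li lj p g). lab (redC N' li' lj' p' g') (f1 v) = lab (redC N li lj p g) v"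
    using I unfolding net_iso_def by blast
  interpret IS: isom n "redC N li lj p g" "redC N' li' lj' p' g'" f1
    by (rule isom.intro[OF C.pn1 D.pn1], unfold_locales) (use f1 in auto)
  have jl1: "j \<in> labels (redC N li lj p g)" using C.labels1 C.jl C.ij by auto
  have jl1': "j \<in> labels (redC N' li' lj' p' g')" using IS.labels_f jl1 by simp
  have flj: "f1 lj = lj'" using IS.ln_f[OF jl1] C.ln1[OF jl1] D.ln1[OF jl1'] C.lj D.lj by simp
  have "(g, lj) \<in> arcs (redC N li lj p g)" unfolding C.N1_simps by simp
  hence "(f1 g, lj') \<in> arcs (redC N' li' lj' p' g')" using IS.arc C.V1 flj by blast
  hence "f1 g \<in> pa (redC N' li' lj' p' g') lj'" unfolding pa_def by simp
  hence fg: "f1 g = g'" using D.pa1[OF D.V1(2)] by simp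
  define f where "f x = (if x = li then li' else if x = p then p' else f1 x)" for x
  have fe: "\<And>x. x \<in> nodes (redC N li lj p g) \<Longrightarrow> f x = f1 x" unfolding f_def C.N1_simps by auto
  have fli: "f li = li'" and fp: "f p = p'" unfolding f_def using C.pli_ne by auto
  have flj': "f lj = lj'" and fg': "f g = g'" using fe C.V1 flj fg by auto
  show ?thesis
  proof (rule lift_iso[where ?N1.0 = "redC N li lj p g" and N1' = "redC N' li' lj' p' g'" and f = f
        and X = "{li, p}" and X' = "{li', p'}" and R = "{(g, lj)}" and S = "{(g,p),(p,li),(p,lj)}"])
    show "bij_betw f (nodes (redC N li lj p g)) (nodes (redC N' li' lj' p' g'))"
      using bij_betw_cong[of "nodes (redC N li lj p g)" f f1] fe f1(1) by blast
    show "\<And>u v. u \<in> nodes (redC N li lj p g) \<Longrightarrow> v \<in> nodes (redC N li lj p g) \<Longrightarrow>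
      (u, v) \<in> arcs (redC N li lj p g) \<longleftrightarrow> (f u, f v) \<in> arcs (redC N' li' lj' p' g')"
      using fe IS.arc by simp
    show "\<And>v. v \<in> leaf_set (redC N li lj p g) \<Longrightarrow> lab (redC N' li' lj' p' g') (f v) = lab (redC N li lj p g) v"
      using fe IS.labf unfolding leaf_set_def by simp
    show "nodes N = nodes (redC N li lj p g) \<union> {li, p}" "nodes (redC N li lj p g) \<inter> {li, p} = {}"
      unfolding C.N1_simps using C.liV C.pV by auto
    show "nodes N' = nodes (redC N' li' lj' p' g') \<union> {li', p'}" "nodes (redC N' li' lj' p' g') \<inter> {li', p'} = {}"
      unfolding D.N1_simps using D.liV D.pV by auto
    show "bij_betw f {li, p} {li', p'}" unfolding bij_betw_def using fli fp C.pli_ne D.pli_ne by auto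
    show "arcs (redC N li lj p g) \<subseteq> nodes (redC N li lj p g) \<times> nodes (redC N li lj p g)" by (rule C.A1V)
    show "arcs (redC N' li' lj' p' g') \<subseteq> nodes (redC N' li' lj' p' g') \<times> nodes (redC N' li' lj' p' g')" by (rule D.A1V)
    show "arcs N = (arcs (redC N li lj p g) - {(g, lj)}) \<union> {(g,p),(p,li),(p,lj)}" by (rule C.A_dec)
    show "arcs N' = (arcs (redC N' li' lj' p' g') - map_prod f f ` {(g, lj)}) \<union> map_prod f f ` {(g,p),(p,li),(p,lj)}"
      using D.A_dec fli fp flj' fg' by simp
    show "{(g, lj)} \<subseteq> nodes N \<times> nodes N" "{(g,p),(p,li),(p,lj)} \<subseteq> nodes N \<times> nodes N"
      using C.gV C.ljV C.pV C.liV by auto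
    show "\<And>v. v \<in> leaf_set N \<Longrightarrow> v \<notin> {li, p} \<Longrightarrow> v \<in> leaf_set (redC N li lj p g)"
      using C.leaf1 by auto
    show "\<And>v. v \<in> leaf_set N \<Longrightarrow> v \<in> {li, p} \<Longrightarrow> lab N' (f v) = lab N v"
    proof -
      fix v assume v: "v \<in> leaf_set N" "v \<in> {li, p}"
      have "v \<noteq> p" using v(1) C.tree_p C.not_tree_leaf C.leaf_set_iff by blast
      hence "v = li" using v(2) by simp
      thus "lab N' (f v) = lab N v" using fli C.li_leaf D.li_leaf by simp
    qed
    show "lab (redC N li lj p g) = lab N" "lab (redC N' li' lj' p' g') = lab N'"
      using C.N1_simps D.N1_simps by auto
  qed
qed

lemma card_swap: assumes "finite S" "a \<in> S" "b \<notin> S" shows "card (insert b (S - {a})) = card S"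
proof -
  have "card (insert b (S - {a})) = Suc (card (S - {a}))" using assms by simp
  also have "\<dots> = card S" using assms by (metis card_Suc_Diff1)
  finally show ?thesis .
qed

lemma sum_swap: assumes "finite S" "a \<in> S" "b \<notin> S" "f b = f a"
  shows "sum f (insert b (S - {a})) = sum f S"
proof -
  have "sum f (insert b (S - {a})) = f b + sum f (S - {a})" using assms by simp
  also have "\<dots> = sum f S" using assms by (simp add: sum.remove)
  finally show ?thesis .
qed

definition redR :: "'a net \<Rightarrow> 'a \<Rightarrow> 'a \<Rightarrow> 'a \<Rightarrow> 'a \<Rightarrow> 'a \<Rightarrow> 'a \<Rightarrow> 'a net" where
  "redR N li lj h u q g = N\<lparr>nodes := nodes N - {h, u},
     arcs := (arcs N - {(q,h),(u,h),(h,li),(g,u),(u,lj)}) \<union> {(q,li),(g,lj)}\<rparr>"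

definition rmap :: "nat \<Rightarrow> nat \<Rightarrow> nat \<times> (nat \<Rightarrow> nat) \<Rightarrow> nat \<times> (nat \<Rightarrow> nat)" where
  "rmap i j s = (fst s - snd s i, (snd s)(i := snd s i - snd s j))"

locale rch = pn +
  fixes i j :: nat and li lj h u q g :: 'a
  assumes ij: "i \<noteq> j"
  and li: "li = leaf_node N i" and lj: "lj = leaf_node N j"
  and il: "i \<in> labels N" and jl: "j \<in> labels N"
  and pli: "pa N li = {h}" and plj: "pa N lj = {u}"
  and chh: "ch N h = {li}" and pah: "pa N h = {u, q}" and uq: "u \<noteq> q"
  and chu: "ch N u = {h, lj}" and pau: "pa N u = {g}"
begin

lemma li_leaf: "li \<in> leaf_set N" "lab N li = i" using ln[OF il] li by auto
lemma lj_leaf: "lj \<in> leaf_set N" "lab N lj = j" using ln[OF jl] lj by auto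
lemma is_li: "is_leaf N li" using li_leaf leaf_set_iff by auto
lemma is_lj: "is_leaf N lj" using lj_leaf leaf_set_iff by auto
lemma lilj: "li \<noteq> lj" using li_leaf lj_leaf ij by auto
lemma ali: "(a, li) \<in> arcs N \<longleftrightarrow> a = h" using pli unfolding pa_def by auto
lemma alj: "(a, lj) \<in> arcs N \<longleftrightarrow> a = u" using plj unfolding pa_def by auto
lemma ah: "(a, h) \<in> arcs N \<longleftrightarrow> a = u \<or> a = q" using pah unfolding pa_def by auto
lemma ha: "(h, b) \<in> arcs N \<longleftrightarrow> b = li" using chh unfolding ch_def by auto
lemma au: "(a, u) \<in> arcs N \<longleftrightarrow> a = g" using pau unfolding pa_def by auto
lemma ua: "(u, b) \<in> arcs N \<longleftrightarrow> b = h \<or> b = lj" using chu unfolding ch_def by auto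
lemma chli: "(li, w) \<notin> arcs N" using leafD(1)[OF is_li] unfolding ch_def by auto
lemma chlj: "(lj, w) \<notin> arcs N" using leafD(1)[OF is_lj] unfolding ch_def by auto
lemma hV: "h \<in> nodes N" using arcV1 ha by blast
lemma uV: "u \<in> nodes N" using arcV1 ua by blast
lemma qV: "q \<in> nodes N" using arcV1 ah by blast
lemma gV: "g \<in> nodes N" using arcV1 au by blast
lemma liV: "li \<in> nodes N" using arcV2 ha by blast
lemma ljV: "lj \<in> nodes N" using arcV2 ua by blast
lemma hu: "h \<noteq> u" using irr ua by blast
lemma hl: "h \<noteq> li" "h \<noteq> lj" using chli chlj ha by blast+
lemma ul: "u \<noteq> li" "u \<noteq> lj" using chli chlj ua by blast+
lemma ql: "q \<noteq> li" "q \<noteq> lj" "q \<noteq> h" using chli chlj ah irr by blast+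
lemma gl: "g \<noteq> li" "g \<noteq> lj" "g \<noteq> u" using chli chlj au irr by blast+
lemma gh: "g \<noteq> h"
proof
  assume "g = h"
  hence "u = li" using au ha by blast
  thus False using ul by simp
qed
lemma ret_h: "is_reticulation N h"
  unfolding is_reticulation_def indeg_pa outdeg_ch using hV chh pah uq by simp
lemma tree_u: "is_tree_node N u"
  unfolding is_tree_node_def indeg_pa outdeg_ch using uV chu pau hl by simp

lemma reduce_eq: "reduce N (i, j) = redR N li lj h u q g"
proof -
  have par: "parent N li = h" "parent N lj = u" using parent_eq pli plj by auto
  have nc: "\<not> is_cherry N (i, j)" unfolding is_cherry_def using par li lj hu by simp
  have rc: "is_ret_cherry N (i, j)" unfolding is_ret_cherry_def
    using par li lj ij il jl ret_h tree_u ah by simp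
  define M0 where "M0 = N\<lparr>arcs := arcs N - {(u, h)}\<rparr>"
  have e1: "suppress M0 h = N\<lparr>nodes := nodes N - {h},
     arcs := (arcs N - {(u,h),(q,h),(h,li)}) \<union> {(q,li)}\<rparr>"
  proof -
    have "{e \<in> arcs N - {(u, h)}. fst e \<noteq> h \<and> snd e \<noteq> h} = arcs N - {(u,h),(q,h),(h,li)}"
    proof (intro set_eqI iffI)
      fix e assume e: "e \<in> {e \<in> arcs N - {(u, h)}. fst e \<noteq> h \<and> snd e \<noteq> h}"
      thus "e \<in> arcs N - {(u,h),(q,h),(h,li)}" by auto
    next
      fix e assume e: "e \<in> arcs N - {(u,h),(q,h),(h,li)}"
      obtain a b where ab: "e = (a, b)" by fastforce
      have "a \<noteq> h" using e ab ha by auto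
      moreover have "b \<noteq> h" using e ab ah by auto
      ultimately show "e \<in> {e \<in> arcs N - {(u, h)}. fst e \<noteq> h \<and> snd e \<noteq> h}" using e ab by auto
    qed
    moreover have "{(a, b) |a b. (a, h) \<in> arcs N - {(u, h)} \<and> (h, b) \<in> arcs N - {(u, h)}} = {(q, li)}"
      using ah ha uq hu hl ql by auto
    ultimately show ?thesis unfolding suppress_def M0_def by simp
  qed
  have e2: "suppress (N\<lparr>nodes := nodes N - {h}, arcs := (arcs N - {(u,h),(q,h),(h,li)}) \<union> {(q,li)}\<rparr>) u
     = redR N li lj h u q g"
  proof -
    have "{e \<in> (arcs N - {(u,h),(q,h),(h,li)}) \<union> {(q,li)}. fst e \<noteq> u \<and> snd e \<noteq> u}
        = (arcs N - {(q,h),(u,h),(h,li),(g,u),(u,lj)}) \<union> {(q,li)}"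
    proof (intro set_eqI iffI)
      fix e assume e: "e \<in> {e \<in> (arcs N - {(u,h),(q,h),(h,li)}) \<union> {(q,li)}. fst e \<noteq> u \<and> snd e \<noteq> u}"
      thus "e \<in> (arcs N - {(q,h),(u,h),(h,li),(g,u),(u,lj)}) \<union> {(q,li)}" by auto
    next
      fix e assume e: "e \<in> (arcs N - {(q,h),(u,h),(h,li),(g,u),(u,lj)}) \<union> {(q,li)}"
      obtain a b where ab: "e = (a, b)" by fastforce
      show "e \<in> {e \<in> (arcs N - {(u,h),(q,h),(h,li)}) \<union> {(q,li)}. fst e \<noteq> u \<and> snd e \<noteq> u}"
      proof (cases "e = (q, li)")
        case True thus ?thesis using uq ul by auto
      next
        case False
        have "a \<noteq> u" using e ab ua False by auto
        moreover have "b \<noteq> u" using e ab au False by auto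
        ultimately show ?thesis using e ab False by auto
      qed
    qed
    moreover have "{(a, b) |a b. (a, u) \<in> (arcs N - {(u,h),(q,h),(h,li)}) \<union> {(q,li)} \<and>
        (u, b) \<in> (arcs N - {(u,h),(q,h),(h,li)}) \<union> {(q,li)}} = {(g, lj)}"
      using au ua uq ul hl gl hu lilj by auto
    moreover have "nodes N - {h} - {u} = nodes N - {h, u}" by auto
    ultimately show ?thesis unfolding suppress_def redR_def by (simp add: insert_commute)
  qed
  show ?thesis unfolding reduce_def Let_def
    using nc rc li[symmetric] lj[symmetric] par e1 e2 M0_def by simp
qed

abbreviation "N1 \<equiv> redR N li lj h u q g"

lemma N1_simps: "nodes N1 = nodes N - {h, u}"
  "arcs N1 = (arcs N - {(q,h),(u,h),(h,li),(g,u),(u,lj)}) \<union> {(q,li),(g,lj)}"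
  "lab N1 = lab N"
  unfolding redR_def by simp_all

lemma V1: "li \<in> nodes N1" "lj \<in> nodes N1" "q \<in> nodes N1" "g \<in> nodes N1" "rt \<in> nodes N1"
proof -
  show "li \<in> nodes N1" "lj \<in> nodes N1" "q \<in> nodes N1" "g \<in> nodes N1"
    using liV ljV qV gV hl ul ql gl gh uq unfolding N1_simps by auto
  have "rt \<noteq> h" using rt ret_h unfolding is_root_def is_reticulation_def by auto
  moreover have "rt \<noteq> u" using rt tree_u unfolding is_root_def is_tree_node_def by auto
  ultimately show "rt \<in> nodes N1" using rt unfolding N1_simps is_root_def by auto
qed

lemma N1_sub: "nodes N1 \<subseteq> nodes N" unfolding N1_simps by auto

lemma in_ch_h: "h \<in> ch N x \<longleftrightarrow> x = u \<or> x = q" using ah unfolding ch_def by simp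
lemma in_ch_u: "u \<in> ch N x \<longleftrightarrow> x = g" using au unfolding ch_def by simp
lemma li_ch: "li \<notin> ch N x" if "x \<noteq> h" using ali that unfolding ch_def by simp
lemma lj_ch: "lj \<notin> ch N x" if "x \<noteq> u" using alj that unfolding ch_def by simp

lemma ch1_none: assumes "x \<in> nodes N1" "x \<noteq> q" "x \<noteq> g" shows "ch N1 x = ch N x"
proof -
  have "x \<noteq> h" "x \<noteq> u" using assms(1) unfolding N1_simps by auto
  thus ?thesis using assms in_ch_h in_ch_u unfolding ch_def N1_simps by auto
qed

lemma ch1_q: assumes "q \<noteq> g" shows "ch N1 q = insert li (ch N q - {h})"
  using assms in_ch_u[of q] uq unfolding ch_def N1_simps by auto

lemma ch1_g: assumes "q \<noteq> g" shows "ch N1 g = insert lj (ch N g - {u})"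
  using assms in_ch_h[of g] gl gh unfolding ch_def N1_simps by auto

lemma ch1_qg: assumes "q = g" shows "ch N1 g = insert li (insert lj (ch N g - {u}) - {h})"
  using assms hl hu lilj unfolding ch_def N1_simps by auto

lemma pa1: assumes "x \<in> nodes N1" shows "pa N1 x = (if x = li then {q} else if x = lj then {g} else pa N x)"
proof -
  have "x \<noteq> h" "x \<noteq> u" using assms(1) unfolding N1_simps by auto
  thus ?thesis using ali alj lilj unfolding pa_def N1_simps by auto
qed

lemma ch_facts: "h \<in> ch N q" "u \<in> ch N g" "li \<notin> ch N q" "lj \<notin> ch N g" "lj \<notin> ch N q" "li \<notin> ch N g"
  using in_ch_h in_ch_u li_ch lj_ch ql gl gh uq by auto

lemma dg1: assumes "x \<in> nodes N1" shows "card (pa N1 x) = card (pa N x) \<and> card (ch N1 x) = card (ch N x)"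
proof
  show "card (pa N1 x) = card (pa N x)" using pa1[OF assms] pli plj by simp
  show "card (ch N1 x) = card (ch N x)"
  proof (cases "x = q \<or> x = g")
    case False thus ?thesis using ch1_none[OF assms] by simp
  next
    case True
    show ?thesis
    proof (cases "q = g")
      case qg: True
      have c1: "card (insert lj (ch N g - {u})) = card (ch N g)"
        by (rule card_swap) (use fin_ch ch_facts in auto)
      have c2: "card (insert li (insert lj (ch N g - {u}) - {h})) = card (insert lj (ch N g - {u}))"
        by (rule card_swap) (use fin_ch ch_facts qg hu hl lilj in auto)
      have "x = g" using True qg by auto
      thus ?thesis using ch1_qg[OF qg] c1 c2 by simp
    next
      case False
      show ?thesis
      proof (cases "x = q")
        case True
        have "card (insert li (ch N q - {h})) = card (ch N q)"
          by (rule card_swap) (use fin_ch ch_facts in auto)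
        thus ?thesis using ch1_q[OF False] True by simp
      next
        case xq: False
        hence xg: "x = g" using True by simp
        have "card (insert lj (ch N g - {u})) = card (ch N g)"
          by (rule card_swap) (use fin_ch ch_facts in auto)
        thus ?thesis using ch1_g[OF False] xg by simp
      qed
    qed
  qed
qed

lemma A1V: "arcs N1 \<subseteq> nodes N1 \<times> nodes N1"
proof
  fix e assume e: "e \<in> arcs N1"
  obtain a b where ab0: "e = (a,b)" by fastforce
  show "e \<in> nodes N1 \<times> nodes N1"
  proof (cases "e \<in> {(q,li),(g,lj)}")
    case True thus ?thesis using V1 by auto
  next
    case False
    have ab: "(a,b) \<in> arcs N" "(a,b) \<notin> {(q,h),(u,h),(h,li),(g,u),(u,lj)}"
      using e False ab0 unfolding N1_simps by auto
    have "a \<noteq> h" using ab ha by auto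
    moreover have "b \<noteq> h" using ab ah by auto
    moreover have "a \<noteq> u" using ab ua by auto
    moreover have "b \<noteq> u" using ab au by auto
    ultimately show ?thesis using ab ab0 arcV1 arcV2 unfolding N1_simps by auto
  qed
qed

lemma A1T: "arcs N1 \<subseteq> (arcs N)\<^sup>+"
proof
  fix e assume e: "e \<in> arcs N1"
  show "e \<in> (arcs N)\<^sup>+"
  proof (cases "e \<in> {(q,li),(g,lj)}")
    case True
    have "(q, h) \<in> arcs N" "(h, li) \<in> arcs N" "(g, u) \<in> arcs N" "(u, lj) \<in> arcs N" using ah ha au ua by auto
    hence "(q, li) \<in> (arcs N)\<^sup>+" "(g, lj) \<in> (arcs N)\<^sup>+" by auto
    thus ?thesis using True by auto
  next
    case False hence "e \<in> arcs N" using e unfolding N1_simps by auto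
    thus ?thesis by (rule r_into_trancl')
  qed
qed

lemmas PS1 = phylo_sub[of N1, OF N1_simps(3) N1_sub A1V A1T dg1 V1(5)]

lemma pn1: "pn n N1" using PS1(1) by unfold_locales

lemma A_dec: "arcs N = (arcs N1 - {(q,li),(g,lj)}) \<union> {(q,h),(u,h),(h,li),(g,u),(u,lj)}"
proof -
  have "(q, li) \<notin> arcs N" "(g, lj) \<notin> arcs N" using ali alj ql gl by auto
  moreover have "{(q,h),(u,h),(h,li),(g,u),(u,lj)} \<subseteq> arcs N" using ah ha au ua by auto
  moreover have "{(q,li),(g,lj)} \<inter> {(q,h),(u,h),(h,li),(g,u),(u,lj)} = {}" using hl ul gh gl ql uq lilj by auto
  ultimately show ?thesis unfolding N1_simps by blast
qed

end

context rch begin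

lemma np1: assumes "x \<in> nodes N1" "y \<in> nodes N1" "y \<noteq> li" shows "npaths N1 x y = npaths N x y"
proof -
  have yh: "y \<noteq> h" "y \<noteq> u" using assms(2) unfolding N1_simps by auto
  have nli: "npaths N li y = 0" using np_leaf[OF is_li] assms(3) by simp
  have nh: "npaths N h y = 0" using np_rec[OF hV] chh yh nli by simp
  have nu: "npaths N u y = npaths N lj y" using np_rec[OF uV] chu yh hl nh by simp
  have "\<And>x. x \<in> nodes N1 \<Longrightarrow> npaths N x y = (if x = y then 1 else (\<Sum>w\<in>ch N1 x. npaths N w y))"
  proof -
    fix x assume x: "x \<in> nodes N1"
    have xV: "x \<in> nodes N" using x N1_sub by auto
    show "npaths N x y = (if x = y then 1 else (\<Sum>w\<in>ch N1 x. npaths N w y))"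
    proof (cases "x = y")
      case True thus ?thesis using np_rec[OF xV] by simp
    next
      case False
      have "(\<Sum>w\<in>ch N1 x. npaths N w y) = (\<Sum>w\<in>ch N x. npaths N w y)"
      proof (cases "x = q \<or> x = g")
        case False thus ?thesis using ch1_none[OF x] by simp
      next
        case True
        show ?thesis
        proof (cases "q = g")
          case qg: True
          have s1: "(\<Sum>w\<in>insert lj (ch N g - {u}). npaths N w y) = (\<Sum>w\<in>ch N g. npaths N w y)"
            by (rule sum_swap) (use fin_ch ch_facts nu in auto)
          have s2: "(\<Sum>w\<in>insert li (insert lj (ch N g - {u}) - {h}). npaths N w y)
              = (\<Sum>w\<in>insert lj (ch N g - {u}). npaths N w y)"
            by (rule sum_swap) (use fin_ch ch_facts qg hu hl lilj nli nh in auto)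
          have "x = g" using True qg by auto
          thus ?thesis using ch1_qg[OF qg] s1 s2 by simp
        next
          case False
          show ?thesis
          proof (cases "x = q")
            case True
            have "(\<Sum>w\<in>insert li (ch N q - {h}). npaths N w y) = (\<Sum>w\<in>ch N q. npaths N w y)"
              by (rule sum_swap) (use fin_ch ch_facts nli nh in auto)
            thus ?thesis using ch1_q[OF False] True by simp
          next
            case xq: False
            hence xg: "x = g" using True by simp
            have "(\<Sum>w\<in>insert lj (ch N g - {u}). npaths N w y) = (\<Sum>w\<in>ch N g. npaths N w y)"
              by (rule sum_swap) (use fin_ch ch_facts nu in auto)
            thus ?thesis using ch1_g[OF False] xg by simp
          qed
        qed
      qed
      thus ?thesis using np_rec[OF xV] False by simp
    qed
  qed
  from pn.np_unique[OF pn1 this assms(1)] show ?thesis by simp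
qed

lemma is1: assumes "x \<in> nodes N1"
  shows "is_leaf N1 x \<longleftrightarrow> is_leaf N x" "is_tree_node N1 x \<longleftrightarrow> is_tree_node N x"
    "is_reticulation N1 x \<longleftrightarrow> is_reticulation N x"
  using PS1(2-4) assms by auto

lemma not_leaf_ret: "is_reticulation N x \<Longrightarrow> \<not> is_leaf N x" unfolding is_leaf_def is_reticulation_def by simp

lemma leaf1: "leaf_set N1 = leaf_set N"
proof -
  have "\<not> is_leaf N h" "\<not> is_leaf N u" using ret_h tree_u not_leaf_ret not_leaf_tree by auto
  thus ?thesis using is1(1) unfolding leaf_set_def N1_simps by auto
qed

lemma ret1: "ret_set N1 = ret_set N - {h}"
proof -
  have "\<not> is_reticulation N u" using tree_u unfolding is_tree_node_def is_reticulation_def by simp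
  thus ?thesis using is1(3) unfolding ret_set_def N1_simps by auto
qed

lemma VT1: "VT N1 = VT N - {u}"
proof -
  have "h \<notin> VT N" using ret_h unfolding VT_def is_reticulation_def is_leaf_def is_tree_node_def by auto
  thus ?thesis using is1(1,2) unfolding VT_def N1_simps by auto
qed

lemma labels1: "labels N1 = labels N" unfolding labels_def leaf1 N1_simps ..

lemma ln1: assumes "k \<in> labels N" shows "leaf_node N1 k = leaf_node N k"
proof -
  have "leaf_node N k \<in> leaf_set N1" using ln(1)[OF assms] leaf1 by simp
  moreover have "lab N1 (leaf_node N k) = k" using ln(2)[OF assms] N1_simps by simp
  ultimately show ?thesis using pn.ln_lab[OF pn1, of "leaf_node N k"] by simp
qed

lemma nl_li: assumes "x \<noteq> li" "x \<noteq> h" shows "npaths N x li = npaths N x u + npaths N x q"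
  using np_back1[OF liV pli assms(1)] np_back2[OF hV pah uq assms(2)] by simp

lemma nl_lj: assumes "x \<noteq> lj" shows "npaths N x lj = npaths N x u"
  using np_back1[OF ljV plj assms(1)] .

lemma np1_li: assumes "x \<in> nodes N1" shows "npaths N1 x li = npaths N x li - npaths N x lj"
proof (cases "x = li")
  case True
  have "npaths N1 li li = 1" using pn.np_rec[OF pn1 V1(1)] by simp
  moreover have "npaths N li li = 1" "npaths N li lj = 0" using np_leaf[OF is_li] lilj by auto
  ultimately show ?thesis using True by simp
next
  case False
  have xh: "x \<noteq> h" using assms unfolding N1_simps by auto
  have "pa N1 li = {q}" using pa1[OF V1(1)] by simp
  hence "npaths N1 x li = npaths N1 x q" using pn.np_back1[OF pn1 V1(1)] False by blast
  also have "\<dots> = npaths N x q" using np1[OF assms V1(3)] ql by simp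
  finally have e: "npaths N1 x li = npaths N x q" .
  show ?thesis
  proof (cases "x = lj")
    case True
    have "npaths N lj q = 0" using np_leaf[OF is_lj] ql by simp
    moreover have "npaths N lj li = 0" using np_leaf[OF is_lj] lilj by simp
    ultimately show ?thesis using e True by simp
  next
    case xlj: False
    show ?thesis using e nl_li[OF False xh] nl_lj[OF xlj] by simp
  qed
qed

lemma co_i: "co N x i = npaths N x li" "co N x j = npaths N x lj" using co_np il jl li lj by auto

lemma rp1: assumes "x \<in> nodes N1" shows "rp N1 x = rp N x - co N x i"
proof -
  have hr: "h \<in> ret_set N" using ret_h ret_set_iff by simp
  have "rp N1 x = (\<Sum>r\<in>ret_set N - {h}. npaths N x r)"
    unfolding rp_def ret1
  proof (rule sum.cong)
    fix r assume r: "r \<in> ret_set N - {h}"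
    have "r \<noteq> u" using r tree_u ret_set_iff unfolding is_tree_node_def is_reticulation_def by auto
    moreover have "r \<noteq> li" using r is_li ret_set_iff not_leaf_ret by auto
    moreover have "r \<in> nodes N" using r unfolding ret_set_def by simp
    ultimately have "r \<in> nodes N1" using r unfolding N1_simps by auto
    thus "npaths N1 x r = npaths N x r" using np1 assms \<open>r \<noteq> li\<close> by simp
  qed simp
  moreover have "rp N x = npaths N x h + (\<Sum>r\<in>ret_set N - {h}. npaths N x r)"
    unfolding rp_def using hr fin_ret by (simp add: sum.remove)
  moreover have "npaths N x h = co N x i \<or> (co N x i = 1 \<and> rp N x = 0)"
  proof (cases "x = li")
    case True thus ?thesis using co_i np_leaf[OF is_li] leaf_rp[OF is_li] by simp
  next
    case False thus ?thesis using co_i np_back1[OF liV pli False] by simp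
  qed
  ultimately show ?thesis by auto
qed

lemma co1: assumes "x \<in> nodes N1" shows "co N1 x = (co N x)(i := co N x i - co N x j)"
proof
  fix k show "co N1 x k = ((co N x)(i := co N x i - co N x j)) k"
  proof (cases "k \<in> labels N")
    case False thus ?thesis using labels1 il unfolding co_def by auto
  next
    case True
    show ?thesis
    proof (cases "k = i")
      case True
      thus ?thesis using co_np[OF il] pn.co_np[OF pn1] labels1 il ln1[OF il] li np1_li[OF assms] co_i by simp
    next
      case False
      have lk: "leaf_node N k \<in> leaf_set N" "leaf_node N k \<noteq> li"
        using ln[OF True] li_leaf(2) False by auto
      have "leaf_node N k \<in> nodes N1" using lk(1) leaf1 pn.ln(1)[OF pn1] unfolding leaf_set_def N1_simps by auto
      thus ?thesis using np1[OF assms _ lk(2)] False True co_np[OF True] pn.co_np[OF pn1] labels1 ln1[OF True]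
        by simp
    qed
  qed
qed

lemma sg_u: "sg N u = (1, dl2 i j)"
proof -
  have nr: "\<not> is_reticulation N u" using tree_u unfolding is_tree_node_def is_reticulation_def by simp
  have "rp N h = 1" using rp_rec[OF hV] ret_h chh leaf_rp[OF is_li] by simp
  hence r: "rp N u = 1" using rp_rec[OF uV] nr chu hl leaf_rp[OF is_lj] by simp
  have "co N u = dl2 i j"
  proof
    fix k show "co N u k = dl2 i j k"
    proof (cases "k \<in> labels N")
      case True
      have lk: "is_leaf N (leaf_node N k)" "lab N (leaf_node N k) = k" using ln_leaf[OF True] ln(2)[OF True] by auto
      have "leaf_node N k \<noteq> u" using lk tree_u not_leaf_tree by auto
      moreover have "leaf_node N k \<noteq> h" using lk ret_h not_leaf_ret by auto
      ultimately have "npaths N u (leaf_node N k) = npaths N li (leaf_node N k) + npaths N lj (leaf_node N k)"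
        using np_rec[OF uV] np_rec[OF hV] chu chh hl by simp
      moreover have "li = leaf_node N k \<longleftrightarrow> k = i"
      proof
        assume "li = leaf_node N k" thus "k = i" using lk(2) li_leaf(2) by simp
      next
        assume "k = i" thus "li = leaf_node N k" using li by simp
      qed
      moreover have "lj = leaf_node N k \<longleftrightarrow> k = j"
      proof
        assume "lj = leaf_node N k" thus "k = j" using lk(2) lj_leaf(2) by simp
      next
        assume "k = j" thus "lj = leaf_node N k" using lj by simp
      qed
      ultimately show ?thesis unfolding co_def dl2_def using True np_leaf[OF is_li] np_leaf[OF is_lj] ij by auto
    next
      case False thus ?thesis unfolding co_def dl2_def using il jl by auto
    qed
  qed
  thus ?thesis using r unfolding sg_def by simp
qed

lemma SR1: "SR N1 = image_mset (rmap i j) (SR N - {#(1, dl2 i j)#})"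
proof -
  have uVT: "u \<in> VT N" using tree_u uV unfolding VT_def by auto
  have m: "mset_set (VT N1) = mset_set (VT N) - {#u#}"
    unfolding VT1 using mset_set_Diff[OF fin_VT, of "{u}"] uVT by simp
  have sub: "{#u#} \<subseteq># mset_set (VT N)" using uVT fin_VT by simp
  have "SR N1 = image_mset (sg N1) (mset_set (VT N) - {#u#})" unfolding SR_def m ..
  also have "\<dots> = image_mset (rmap i j \<circ> sg N) (mset_set (VT N) - {#u#})"
  proof (rule image_mset_cong)
    fix x assume "x \<in># mset_set (VT N) - {#u#}"
    hence "x \<in> VT N1" using m fin_VT pn.fin_VT[OF pn1] by (metis elem_mset_set)
    hence x: "x \<in> nodes N1" unfolding VT_def by simp
    show "sg N1 x = (rmap i j \<circ> sg N) x" unfolding sg_def rmap_def using rp1[OF x] co1[OF x] by simp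
  qed
  also have "\<dots> = image_mset (rmap i j) (image_mset (sg N) (mset_set (VT N) - {#u#}))"
    by (simp add: multiset.map_comp)
  also have "image_mset (sg N) (mset_set (VT N) - {#u#}) = SR N - {#(1, dl2 i j)#}"
    unfolding SR_def image_mset_Diff[OF sub] by (simp add: sg_u)
  finally show ?thesis .
qed

lemma bound: assumes "v \<in> VT N" "lp N v \<ge> 2" shows "co N v j \<le> co N v i"
proof -
  have t: "is_tree_node N v" using assms leaf_lp unfolding VT_def by fastforce
  have "v \<noteq> li" "v \<noteq> lj" using t is_li is_lj not_leaf_tree by auto
  moreover have "v \<noteq> h" using t ret_h unfolding is_tree_node_def is_reticulation_def by auto
  ultimately show ?thesis using co_i nl_li nl_lj by simp
qed

lemma witness: "\<exists>t\<in>VT N. lp N t \<ge> 2 \<and> co N t j < co N t i"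
proof -
  have qh: "(q, h) \<in> arcs N" using ah by simp
  have "q \<noteq> rt" using root_child_not_ret ret_h qh by blast
  hence nr: "\<not> is_root N q" using rt_uniq by blast
  have nl: "\<not> is_leaf N q" using ch_not_leaf qh by blast
  obtain t where t: "is_tree_node N t" "(t, q) \<in> (arcs N)\<^sup>*"
  proof (cases "is_tree_node N q")
    case True thus ?thesis using that by blast
  next
    case False
    hence "is_reticulation N q" using classify[OF qV] nr nl by blast
    thus ?thesis using ret_tree_anc that by (meson trancl_into_rtrancl)
  qed
  have tV: "t \<in> nodes N" using t(1) unfolding is_tree_node_def by simp
  have np: "npaths N t q \<ge> 1" using np_pos[OF t(2) qV] .
  have "t \<noteq> li" "t \<noteq> lj" using t is_li is_lj not_leaf_tree by auto
  moreover have "t \<noteq> h" using t ret_h unfolding is_tree_node_def is_reticulation_def by auto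
  ultimately have "co N t j < co N t i" using co_i nl_li nl_lj np by simp
  moreover have "t \<in> VT N" using t(1) tV unfolding VT_def by simp
  ultimately show ?thesis using tree_lp[OF t(1)] by blast
qed

end


context pn begin

lemma nlr: "is_reticulation N x \<Longrightarrow> \<not> is_leaf N x" unfolding is_leaf_def is_reticulation_def by simp

lemma rch_ex: assumes "is_ret_cherry N (i, j)" shows "\<exists>li lj h u q g. rch n N i j li lj h u q g"
proof -
  have ij: "i \<noteq> j" "i \<in> labels N" "j \<in> labels N"
    and r: "is_reticulation N (parent N (leaf_node N i))"
    and t: "is_tree_node N (parent N (leaf_node N j))"
    and a: "(parent N (leaf_node N j), parent N (leaf_node N i)) \<in> arcs N"
    using assms unfolding is_ret_cherry_def by auto
  obtain h where h: "pa N (leaf_node N i) = {h}" "parent N (leaf_node N i) = h" using leaf_parent[OF ij(2)] by blast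
  obtain u where u: "pa N (leaf_node N j) = {u}" "parent N (leaf_node N j) = u" using leaf_parent[OF ij(3)] by blast
  have rh: "is_reticulation N h" and tu: "is_tree_node N u" and uh: "(u, h) \<in> arcs N" using r t a h u by auto
  have hli: "(h, leaf_node N i) \<in> arcs N" using h unfolding pa_def by auto
  have ulj: "(u, leaf_node N j) \<in> arcs N" using u unfolding pa_def by auto
  obtain c where c: "ch N h = {c}" using retD(1)[OF rh] by blast
  have chh: "ch N h = {leaf_node N i}" using c hli unfolding ch_def by auto
  obtain x y where xy: "x \<noteq> y" "pa N h = {x, y}" using retD(2)[OF rh] by blast
  have "u \<in> pa N h" using uh unfolding pa_def by simp
  then obtain q where q: "pa N h = {u, q}" "u \<noteq> q" using xy by auto
  have hlj: "h \<noteq> leaf_node N j" using ln_leaf[OF ij(3)] rh unfolding is_leaf_def is_reticulation_def by auto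
  obtain a' b' where ab: "a' \<noteq> b'" "ch N u = {a', b'}" using treeD(1)[OF tu] by blast
  have "{h, leaf_node N j} \<subseteq> ch N u" using uh ulj unfolding ch_def by auto
  hence chu: "ch N u = {h, leaf_node N j}" using ab hlj by auto
  obtain g where g: "pa N u = {g}" using treeD(2)[OF tu] by blast
  have "rch n N i j (leaf_node N i) (leaf_node N j) h u q g"
    by (rule rch.intro[OF pn_self]) (unfold_locales, use ij h u chh q chu g in auto)
  thus ?thesis by blast
qed

lemma ret_det_aux:
  assumes t: "is_tree_node N x" and ax: "(x, a) \<in> arcs N" and bx: "(x, b) \<in> arcs N"
    and ab: "ch N x = {a, b}" "a \<noteq> b" and la: "lp N a = 1" "rp N a = 1" and lb: "lp N b = 1" "rp N b = 0"
    and s: "co N x = dl2 i j" and ij: "i \<noteq> j"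
  shows "is_ret_cherry N (i, j) \<or> is_ret_cherry N (j, i)"
proof -
  have aV: "a \<in> nodes N" using arcV2 ax .
  have b_leaf: "is_leaf N b" using lp1_cases[OF bx lb(1)] ret_rp lb(2) by fastforce
  have a_ret: "is_reticulation N a" using lp1_cases[OF ax la(1)] leaf_rp la(2) by fastforce
  obtain d where d: "ch N a = {d}" using retD(1)[OF a_ret] by blast
  have ad: "(a, d) \<in> arcs N" using d unfolding ch_def by auto
  have nla: "\<not> is_leaf N a" using a_ret nlr by simp
  have "lp N d = 1" using lp_rec[OF aV] nla d la(1) by simp
  moreover have "rp N d = 0" using rp_rec[OF aV] a_ret d la(2) by simp
  ultimately have d_leaf: "is_leaf N d" using lp1_cases[OF ad] ret_rp by fastforce
  have xV: "x \<in> nodes N" using arcV1 ax .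
  have key: "\<And>k. co N x k = 1 \<Longrightarrow> k \<in> labels N \<and> (leaf_node N k = d \<or> leaf_node N k = b)"
  proof -
    fix k assume k1: "co N x k = 1"
    hence kl: "k \<in> labels N" using co_pos_label[of x k] by simp
    have lf: "is_leaf N (leaf_node N k)" using ln_leaf[OF kl] .
    have "leaf_node N k \<noteq> x" using lf t not_leaf_tree by blast
    moreover have "leaf_node N k \<noteq> a" using lf a_ret nlr by blast
    ultimately have "co N x k = npaths N d (leaf_node N k) + npaths N b (leaf_node N k)"
      using co_np[OF kl] np_rec[OF xV] np_rec[OF aV] ab d by simp
    hence s1: "npaths N d (leaf_node N k) + npaths N b (leaf_node N k) = 1" using k1 by simp
    have "leaf_node N k = d \<or> leaf_node N k = b"
    proof (rule ccontr)
      assume "\<not> (leaf_node N k = d \<or> leaf_node N k = b)"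
      hence "d \<noteq> leaf_node N k" "b \<noteq> leaf_node N k" by auto
      hence "npaths N d (leaf_node N k) = 0" "npaths N b (leaf_node N k) = 0"
        using np_leaf[OF d_leaf, of "leaf_node N k"] np_leaf[OF b_leaf, of "leaf_node N k"] by auto
      thus False using s1 by simp
    qed
    thus "k \<in> labels N \<and> (leaf_node N k = d \<or> leaf_node N k = b)" using kl by simp
  qed
  have "co N x i = 1" "co N x j = 1" using s unfolding dl2_def by auto
  hence ki: "i \<in> labels N" "leaf_node N i = d \<or> leaf_node N i = b"
    and kj: "j \<in> labels N" "leaf_node N j = d \<or> leaf_node N j = b" using key by auto
  have ne: "leaf_node N i \<noteq> leaf_node N j" using ln(2)[OF ki(1)] ln(2)[OF kj(1)] ij by metis
  have pd: "parent N d = a" using leaf_par[OF d_leaf ad] parent_eq by simp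
  have pb: "parent N b = x" using leaf_par[OF b_leaf bx] parent_eq by simp
  show ?thesis
  proof (cases "leaf_node N i = d")
    case True
    hence "leaf_node N j = b" using kj(2) ne by auto
    hence "is_ret_cherry N (i, j)" unfolding is_ret_cherry_def using True pd pb ij ki(1) kj(1) a_ret t ax by simp
    thus ?thesis by simp
  next
    case False
    hence "leaf_node N i = b" "leaf_node N j = d" using ki(2) kj(2) ne by auto
    hence "is_ret_cherry N (j, i)" unfolding is_ret_cherry_def using pd pb ij ki(1) kj(1) a_ret t ax by simp
    thus ?thesis by simp
  qed
qed

lemma ret_detect:
  assumes x: "x \<in> VT N" and s: "sg N x = (1, dl2 i j)" and ij: "i \<noteq> j" "i \<in> {1..n}" "j \<in> {1..n}"
  shows "is_ret_cherry N (i, j) \<or> is_ret_cherry N (j, i)"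
proof -
  have cx: "co N x = dl2 i j" "rp N x = 1" using s unfolding sg_def by auto
  have "lp N x = 2" using lp_co_n cx sum_dl2 ij by simp
  then obtain a b where ab: "a \<noteq> b" "ch N x = {a, b}" "lp N a = 1" "lp N b = 1" "is_tree_node N x"
    "rp N x = rp N a + rp N b" "\<And>y. y \<noteq> x \<Longrightarrow> npaths N x y = npaths N a y + npaths N b y"
    using tree_two_children x by blast
  have arcs: "(x, a) \<in> arcs N" "(x, b) \<in> arcs N" using ab(2) unfolding ch_def by auto
  have "(rp N a = 1 \<and> rp N b = 0) \<or> (rp N a = 0 \<and> rp N b = 1)" using ab(6) cx(2) by auto
  thus ?thesis
  proof
    assume "rp N a = 1 \<and> rp N b = 0"
    thus ?thesis using ret_det_aux[OF ab(5) arcs ab(2) ab(1) ab(3) _ ab(4) _ cx(1) ij(1)] by simp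
  next
    assume "rp N a = 0 \<and> rp N b = 1"
    moreover have "ch N x = {b, a}" using ab(2) by auto
    ultimately show ?thesis using ret_det_aux[OF ab(5) arcs(2) arcs(1) _ _ ab(4) _ ab(3) _ cx(1) ij(1)] ab(1) by simp
  qed
qed

end

lemma rch_lift:
  assumes C: "rch n N i j li lj h u q g" and C': "rch n N' i j li' lj' h' u' q' g'"
    and I: "net_iso (redR N li lj h u q g) (redR N' li' lj' h' u' q' g')"
  shows "net_iso N N'"
proof -
  interpret C: rch n N i j li lj h u q g by (rule C)
  interpret D: rch n N' i j li' lj' h' u' q' g' by (rule C')
  obtain f1 where f1: "bij_betw f1 (nodes (redR N li lj h u q g)) (nodes (redR N' li' lj' h' u' q' g'))"
    "\<forall>a\<in>nodes (redR N li lj h u q g). \<forall>b\<in>nodes (redR N li lj h u q g).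
       (a, b) \<in> arcs (redR N li lj h u q g) \<longleftrightarrow> (f1 a, f1 b) \<in> arcs (redR N' li' lj' h' u' q' g')"
    "\<forall>v\<in>leaf_set (redR N li lj h u q g). lab (redR N' li' lj' h' u' q' g') (f1 v) = lab (redR N li lj h u q g) v"
    using I unfolding net_iso_def by blast
  interpret IS: isom n "redR N li lj h u q g" "redR N' li' lj' h' u' q' g'" f1
    by (rule isom.intro[OF C.pn1 D.pn1], unfold_locales) (use f1 in auto)
  have il1: "i \<in> labels (redR N li lj h u q g)" "j \<in> labels (redR N li lj h u q g)" using C.labels1 C.il C.jl by auto
  have il1': "i \<in> labels (redR N' li' lj' h' u' q' g')" "j \<in> labels (redR N' li' lj' h' u' q' g')"
    using IS.labels_f il1 by auto
  have fli: "f1 li = li'" using IS.ln_f[OF il1(1)] C.ln1[OF C.il] D.ln1[OF D.il] C.li D.li by simp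
  have flj: "f1 lj = lj'" using IS.ln_f[OF il1(2)] C.ln1[OF C.jl] D.ln1[OF D.jl] C.lj D.lj by simp
  have "(q, li) \<in> arcs (redR N li lj h u q g)" unfolding C.N1_simps by simp
  hence "(f1 q, li') \<in> arcs (redR N' li' lj' h' u' q' g')" using IS.arc C.V1 fli by blast
  hence "f1 q \<in> pa (redR N' li' lj' h' u' q' g') li'" unfolding pa_def by simp
  hence fq: "f1 q = q'" using D.pa1[OF D.V1(1)] by simp
  have "(g, lj) \<in> arcs (redR N li lj h u q g)" unfolding C.N1_simps by simp
  hence "(f1 g, lj') \<in> arcs (redR N' li' lj' h' u' q' g')" using IS.arc C.V1 flj by blast
  hence "f1 g \<in> pa (redR N' li' lj' h' u' q' g') lj'" unfolding pa_def by simp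
  hence fg: "f1 g = g'" using D.pa1[OF D.V1(2)] D.lilj by simp
  define f where "f x = (if x = h then h' else if x = u then u' else f1 x)" for x
  have fe: "\<And>x. x \<in> nodes (redR N li lj h u q g) \<Longrightarrow> f x = f1 x" unfolding f_def C.N1_simps by auto
  have fh: "f h = h'" and fu: "f u = u'" unfolding f_def using C.hu by auto
  have fli': "f li = li'" and flj': "f lj = lj'" and fq': "f q = q'" and fg': "f g = g'"
    using fe C.V1 fli flj fq fg by auto
  show ?thesis
  proof (rule lift_iso[where ?N1.0 = "redR N li lj h u q g" and N1' = "redR N' li' lj' h' u' q' g'" and f = f
        and X = "{h, u}" and X' = "{h', u'}" and R = "{(q,li),(g,lj)}" and S = "{(q,h),(u,h),(h,li),(g,u),(u,lj)}"])
    show "bij_betw f (nodes (redR N li lj h u q g)) (nodes (redR N' li' lj' h' u' q' g'))"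
      using bij_betw_cong[of "nodes (redR N li lj h u q g)" f f1] fe f1(1) by blast
    show "\<And>a b. a \<in> nodes (redR N li lj h u q g) \<Longrightarrow> b \<in> nodes (redR N li lj h u q g) \<Longrightarrow>
      (a, b) \<in> arcs (redR N li lj h u q g) \<longleftrightarrow> (f a, f b) \<in> arcs (redR N' li' lj' h' u' q' g')"
      using fe IS.arc by simp
    show "\<And>v. v \<in> leaf_set (redR N li lj h u q g) \<Longrightarrow> lab (redR N' li' lj' h' u' q' g') (f v) = lab (redR N li lj h u q g) v"
      using fe IS.labf unfolding leaf_set_def by simp
    show "nodes N = nodes (redR N li lj h u q g) \<union> {h, u}" "nodes (redR N li lj h u q g) \<inter> {h, u} = {}"
      unfolding C.N1_simps using C.hV C.uV by auto
    show "nodes N' = nodes (redR N' li' lj' h' u' q' g') \<union> {h', u'}" "nodes (redR N' li' lj' h' u' q' g') \<inter> {h', u'} = {}"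
      unfolding D.N1_simps using D.hV D.uV by auto
    show "bij_betw f {h, u} {h', u'}" unfolding bij_betw_def using fh fu C.hu D.hu by auto
    show "arcs (redR N li lj h u q g) \<subseteq> nodes (redR N li lj h u q g) \<times> nodes (redR N li lj h u q g)" by (rule C.A1V)
    show "arcs (redR N' li' lj' h' u' q' g') \<subseteq> nodes (redR N' li' lj' h' u' q' g') \<times> nodes (redR N' li' lj' h' u' q' g')" by (rule D.A1V)
    show "arcs N = (arcs (redR N li lj h u q g) - {(q,li),(g,lj)}) \<union> {(q,h),(u,h),(h,li),(g,u),(u,lj)}" by (rule C.A_dec)
    show "arcs N' = (arcs (redR N' li' lj' h' u' q' g') - map_prod f f ` {(q,li),(g,lj)}) \<union>
        map_prod f f ` {(q,h),(u,h),(h,li),(g,u),(u,lj)}"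
      using D.A_dec fli' flj' fq' fg' fh fu by simp
    show "{(q,li),(g,lj)} \<subseteq> nodes N \<times> nodes N" "{(q,h),(u,h),(h,li),(g,u),(u,lj)} \<subseteq> nodes N \<times> nodes N"
      using C.gV C.ljV C.qV C.liV C.hV C.uV by auto
    show "\<And>v. v \<in> leaf_set N \<Longrightarrow> v \<notin> {h, u} \<Longrightarrow> v \<in> leaf_set (redR N li lj h u q g)"
      using C.leaf1 by auto
    show "\<And>v. v \<in> leaf_set N \<Longrightarrow> v \<in> {h, u} \<Longrightarrow> lab N' (f v) = lab N v"
    proof -
      fix v assume v: "v \<in> leaf_set N" "v \<in> {h, u}"
      have "is_leaf N v" using v(1) C.leaf_set_iff by simp
      moreover have "\<not> is_leaf N h" "\<not> is_leaf N u" using C.ret_h C.tree_u C.not_leaf_ret C.not_leaf_tree by auto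
      ultimately show "lab N' (f v) = lab N v" using v(2) by auto
    qed
    show "lab (redR N li lj h u q g) = lab N" "lab (redR N' li' lj' h' u' q' g') = lab N'"
      using C.N1_simps D.N1_simps by auto
  qed
qed


context pn begin

lemma SR_mem: "x \<in># SR N \<longleftrightarrow> (\<exists>v\<in>VT N. sg N v = x)"
  unfolding SR_def using fin_VT by auto

lemma lp_sg: "lp N x = (\<Sum>k\<in>{1..n}. snd (sg N x) k)" unfolding sg_def using lp_co_n by simp

lemma SR_dec: "image_mset (dec n) (mu_rep n N) = SR N"
proof -
  have "image_mset (dec n) (mu_rep n N) = image_mset (dec n \<circ> enc n) (SR N)"
    unfolding mu_rep_enc by (simp add: multiset.map_comp)
  also have "\<dots> = image_mset id (SR N)"
  proof (rule image_mset_cong)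
    fix s assume "s \<in># SR N"
    then obtain v where "sg N v = s" using SR_mem by blast
    hence "\<And>k. snd s k \<noteq> 0 \<Longrightarrow> 1 \<le> k \<and> k \<le> n" using co_supp unfolding sg_def by auto
    thus "(dec n \<circ> enc n) s = id s" using dec_enc by simp
  qed
  finally show ?thesis by simp
qed

lemma base_case:
  fixes N' :: "'b net"
  assumes T: "trivial_net N" and P': "pn n N'" and E: "SR N = SR N'"
  shows "net_iso N N'"
proof -
  interpret B: pn n N' by (rule P')
  obtain r l where rl: "r \<noteq> l" "nodes N = {r, l}" "arcs N = {(r, l)}" using T unfolding trivial_net_def by blast
  have chr: "ch N r = {l}" "ch N l = {}" "pa N r = {}" "pa N l = {r}" using rl unfolding ch_def pa_def by auto
  have ll: "is_leaf N l" unfolding is_leaf_def indeg_pa outdeg_ch using chr rl by simp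
  have nr: "\<not> is_leaf N r" "\<not> is_tree_node N r" unfolding is_leaf_def is_tree_node_def indeg_pa using chr by auto
  have VT: "VT N = {l}" unfolding VT_def using rl ll nr by auto
  have "SR N = {#sg N l#}" unfolding SR_def VT by simp
  hence SR': "image_mset (sg N') (mset_set (VT N')) = {#sg N l#}" using E unfolding SR_def by simp
  hence "size (mset_set (VT N')) = 1" by (metis size_image_mset size_single)
  then obtain w where w0: "mset_set (VT N') = {#w#}" using size_1_singleton_mset by blast
  have w: "mset_set (VT N') = {#w#}" "sg N' w = sg N l" using w0 SR' by auto
  have VT': "VT N' = {w}"
  proof -
    have "set_mset (mset_set (VT N')) = VT N'" using B.fin_VT by simp
    thus ?thesis using w0 by simp
  qed
  have wV: "w \<in> nodes N'" using VT' unfolding VT_def by auto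
  have "lp N' w = lp N l" using B.lp_sg lp_sg w(2) by simp
  hence lpw: "lp N' w = 1" using leaf_lp[OF ll] by simp
  have wl: "is_leaf N' w" using VT' B.tree_lp lpw unfolding VT_def by fastforce
  obtain c where c: "ch N' B.rt = {c}" using B.rootD(1)[OF B.rt] by blast
  have rc: "(B.rt, c) \<in> arcs N'" using c unfolding ch_def by auto
  have cV: "c \<in> nodes N'" using B.arcV2 rc .
  have "\<not> is_reticulation N' c" using B.root_child_not_ret rc by blast
  moreover have "\<not> is_root N' c" using B.nonroot_child rc by blast
  ultimately have "c \<in> VT N'" using B.classify[OF cV] cV unfolding VT_def by blast
  hence cw: "c = w" using VT' by simp
  have rtV: "B.rt \<in> nodes N'" using B.rt unfolding is_root_def by simp
  have nodes': "nodes N' = {B.rt, w}"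
  proof
    show "nodes N' \<subseteq> {B.rt, w}"
    proof
      fix x assume x: "x \<in> nodes N'"
      have "(B.rt, x) \<in> (arcs N')\<^sup>*" using B.reach_root x .
      thus "x \<in> {B.rt, w}"
      proof (cases rule: converse_rtranclE)
        case base thus ?thesis by simp
      next
        case (step z)
        have "z \<in> ch N' B.rt" using step(1) unfolding ch_def by simp
        hence "z = w" using c cw by simp
        hence "(w, x) \<in> (arcs N')\<^sup>*" using step(2) by simp
        thus ?thesis
        proof (cases rule: converse_rtranclE)
          case base thus ?thesis by simp
        next
          case (step y) thus ?thesis using B.leafD(1)[OF wl] unfolding ch_def by auto
        qed
      qed
    qed
  qed (use rtV wV in auto)
  have rw: "B.rt \<noteq> w" using B.rt wl unfolding is_root_def is_leaf_def by auto
  have arcs': "arcs N' = {(B.rt, w)}"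
  proof
    show "arcs N' \<subseteq> {(B.rt, w)}"
    proof
      fix e assume e: "e \<in> arcs N'"
      obtain a b where ab: "e = (a, b)" by fastforce
      have "a \<in> {B.rt, w}" "b \<in> {B.rt, w}" using e ab B.arcV1 B.arcV2 nodes' by auto
      moreover have "a \<noteq> w" using e ab B.leafD(1)[OF wl] unfolding ch_def by auto
      moreover have "a \<noteq> b" using e ab B.irr by auto
      ultimately show "e \<in> {(B.rt, w)}" using ab by auto
    qed
  qed (use rc cw in auto)
  have "co N' w = co N l" using w(2) unfolding sg_def by simp
  hence "co N' w (lab N l) = 1" using co_leaf[OF ll] by simp
  hence labw: "lab N' w = lab N l" using B.co_leaf[OF wl] by (auto split: if_splits)
  define f where "f x = (if x = r then B.rt else w)" for x
  have fr: "f r = B.rt" and fl: "f l = w" unfolding f_def using rl(1) by auto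
  have bij: "bij_betw f (nodes N) (nodes N')" unfolding bij_betw_def rl(2) nodes'
    using fr fl rl(1) rw by (simp add: inj_on_def)
  have arc: "\<forall>a\<in>nodes N. \<forall>b\<in>nodes N. (a, b) \<in> arcs N \<longleftrightarrow> (f a, f b) \<in> arcs N'"
  proof (intro ballI)
    fix a b assume "a \<in> nodes N" "b \<in> nodes N"
    hence "a = r \<or> a = l" "b = r \<or> b = l" using rl(2) by auto
    thus "(a, b) \<in> arcs N \<longleftrightarrow> (f a, f b) \<in> arcs N'" unfolding rl(3) arcs' using fr fl rl(1) rw by auto
  qed
  have "leaf_set N \<subseteq> {l}"
  proof
    fix v assume "v \<in> leaf_set N"
    hence "v \<in> nodes N" "is_leaf N v" unfolding leaf_set_def by auto
    thus "v \<in> {l}" using rl(2) nr by auto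
  qed
  hence labs: "\<forall>v\<in>leaf_set N. lab N' (f v) = lab N v" using labw fl by auto
  show ?thesis unfolding net_iso_def using bij arc labs by blast
qed

end

lemma main_ind:
  fixes N :: "'a net" and N' :: "'b net"
  assumes "pn n N" "pn n N'" "reducible_seq N S" "trivial_net (reduce_seq N S)" "SR N = SR N'"
  shows "net_iso N N'"
  using assms
proof (induction S arbitrary: N N')
  case Nil thus ?case using pn.base_case by simp
next
  case (Cons s S)
  interpret A: pn n N by (rule Cons.prems(1))
  interpret B: pn n N' by (rule Cons.prems(2))
  obtain i j where s: "s = (i, j)" by fastforce
  have red: "reducible_pair N (i, j)" "reducible_seq (reduce N (i, j)) S" "trivial_net (reduce_seq (reduce N (i, j)) S)"
    using Cons.prems(3,4) s by auto
  show ?case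
  proof (cases "is_cherry N (i, j)")
    case True
    then obtain li lj p g where C: "cherry n N i j li lj p g" using A.cherry_ex by blast
    interpret C: cherry n N i j li lj p g by (rule C)
    have ijn: "i \<in> {1..n}" "j \<in> {1..n}" using C.il C.jl A.labels_n by auto
    have "(0, dl2 i j) \<in># SR N" using A.SR_mem C.sg_p C.tree_p C.pV unfolding VT_def by auto
    hence "(0, dl2 i j) \<in># SR N'" using Cons.prems(5) by simp
    then obtain x where x: "x \<in> VT N'" "sg N' x = (0, dl2 i j)" using B.SR_mem by blast
    have "is_cherry N' (i, j)" using B.cherry_detect[OF x C.ij ijn] .
    then obtain li' lj' p' g' where C': "cherry n N' i j li' lj' p' g'" using B.cherry_ex by blast
    interpret D: cherry n N' i j li' lj' p' g' by (rule C')
    have "net_iso (redC N li lj p g) (redC N' li' lj' p' g')"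
    proof (rule Cons.IH)
      show "pn n (redC N li lj p g)" "pn n (redC N' li' lj' p' g')" using C.pn1 D.pn1 .
      show "reducible_seq (redC N li lj p g) S" "trivial_net (reduce_seq (redC N li lj p g) S)"
        using red C.reduce_eq by auto
      show "SR (redC N li lj p g) = SR (redC N' li' lj' p' g')"
        using C.SR1 D.SR1 Cons.prems(5) by simp
    qed
    thus ?thesis using cherry_lift[OF C C'] by simp
  next
    case False
    hence "is_ret_cherry N (i, j)" using red(1) unfolding reducible_pair_def by simp
    then obtain li lj h u q g where C: "rch n N i j li lj h u q g" using A.rch_ex by blast
    interpret C: rch n N i j li lj h u q g by (rule C)
    have ijn: "i \<in> {1..n}" "j \<in> {1..n}" using C.il C.jl A.labels_n by auto
    have "(1, dl2 i j) \<in># SR N" using A.SR_mem C.sg_u C.tree_u C.uV unfolding VT_def by auto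
    hence "(1, dl2 i j) \<in># SR N'" using Cons.prems(5) by simp
    then obtain x where x: "x \<in> VT N'" "sg N' x = (1, dl2 i j)" using B.SR_mem by blast
    have "is_ret_cherry N' (i, j)"
    proof (rule ccontr)
      assume nr: "\<not> is_ret_cherry N' (i, j)"
      hence "is_ret_cherry N' (j, i)" using B.ret_detect[OF x C.ij ijn] by simp
      then obtain a b c d e f where D: "rch n N' j i a b c d e f" using B.rch_ex by blast
      interpret D: rch n N' j i a b c d e f by (rule D)
      obtain t where t: "t \<in> VT N" "lp N t \<ge> 2" "co N t j < co N t i" using C.witness by blast
      have "sg N t \<in># SR N'" using A.SR_mem t(1) Cons.prems(5) by metis
      then obtain t' where t': "t' \<in> VT N'" "sg N' t' = sg N t" using B.SR_mem by blast
      have "lp N' t' \<ge> 2" using t' t(2) A.lp_sg B.lp_sg by simp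
      hence "co N' t' i \<le> co N' t' j" using D.bound t'(1) by simp
      moreover have "co N' t' = co N t" using t'(2) unfolding sg_def by simp
      ultimately show False using t(3) by simp
    qed
    then obtain li' lj' h' u' q' g' where C': "rch n N' i j li' lj' h' u' q' g'" using B.rch_ex by blast
    interpret D: rch n N' i j li' lj' h' u' q' g' by (rule C')
    have "net_iso (redR N li lj h u q g) (redR N' li' lj' h' u' q' g')"
    proof (rule Cons.IH)
      show "pn n (redR N li lj h u q g)" "pn n (redR N' li' lj' h' u' q' g')" using C.pn1 D.pn1 .
      show "reducible_seq (redR N li lj h u q g) S" "trivial_net (reduce_seq (redR N li lj h u q g) S)"
        using red C.reduce_eq by auto
      show "SR (redR N li lj h u q g) = SR (redR N' li' lj' h' u' q' g')"
        using C.SR1 D.SR1 Cons.prems(5) by simp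
    qed
    thus ?thesis using rch_lift[OF C C'] by simp
  qed
qed

theorem mainTheorem11:
  fixes n :: nat and N :: "'a net" and N' :: "'b net"
  assumes "orchard n N" and "orchard n N'"
  shows "net_iso N N' \<longleftrightarrow> mu_rep n N = mu_rep n N'"
proof -
  have P: "pn n N" "pn n N'" using assms unfolding orchard_def by (auto intro: pn.intro)
  obtain S where S: "reducible_seq N S" "trivial_net (reduce_seq N S)" using assms(1) unfolding orchard_def by blast
  show ?thesis
  proof
    assume "net_iso N N'"
    then obtain f where f: "bij_betw f (nodes N) (nodes N')"
      "\<forall>u\<in>nodes N. \<forall>v\<in>nodes N. (u, v) \<in> arcs N \<longleftrightarrow> (f u, f v) \<in> arcs N'"
      "\<forall>v\<in>leaf_set N. lab N' (f v) = lab N v" unfolding net_iso_def by blast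
    interpret I: isom n N N' f by (rule isom.intro[OF P], unfold_locales) (use f in auto)
    show "mu_rep n N = mu_rep n N'" unfolding mu_rep_enc using I.SR_f by simp
  next
    assume "mu_rep n N = mu_rep n N'"
    hence "SR N = SR N'" using pn.SR_dec[OF P(1)] pn.SR_dec[OF P(2)] by metis
    thus "net_iso N N'" using main_ind[OF P S] by simp
  qed
qed


end
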